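(* Let $F$ be a finitely generated free group. There is an algorithm which, on input a finitely generated subgroup $H\leqslant F$ (given by a finite generating set), an element $u\in F$ and an element $w\in F$, outputs $\mathrm{Ord}_{Hu}(w)$. In particular, the order problem and the torsion problem for $F$ are computable.
   Context: For a group $G$, a subset $S\subseteq G$ and $g\in G$, $\mathrm{Ord}_S(g)=\min\{k\geq 1: g^k\in S\}$ if such $k$ exists and $0$ otherwise. The order problem asks, given a finitely generated $H\leqslant G$ and $g\in G$, to compute $\mathrm{Ord}_H(g)$; the torsion problem asks to decide whether $\mathrm{Ord}_H(g)\neq 0$. *)

theory Defs
  imports "HOL-Algebra.Algebra" "HOL-Library.Nat_Bijection"
begin

datatype recf =
    Zero
  | Succ
  | Proj nat
  | Comp recf "recf list"
  | PrimRec recf recf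
  | Mu recf

inductive eval :: "recf \<Rightarrow> nat list \<Rightarrow> nat \<Rightarrow> bool" where
  eval_Zero: "eval Zero xs 0"
| eval_Succ: "eval Succ (x # xs) (Suc x)"
| eval_Proj: "i < length xs \<Longrightarrow> eval (Proj i) xs (xs ! i)"
| eval_Comp: "list_all2 (\<lambda>g y. eval g xs y) gs ys \<Longrightarrow> eval f ys z \<Longrightarrow> eval (Comp f gs) xs z"
| eval_PrimRec0: "eval f xs z \<Longrightarrow> eval (PrimRec f g) (0 # xs) z"
| eval_PrimRecS: "eval (PrimRec f g) (n # xs) y \<Longrightarrow> eval g (y # n # xs) z
                   \<Longrightarrow> eval (PrimRec f g) (Suc n # xs) z"
| eval_Mu: "eval g (z # xs) 0 \<Longrightarrow> (\<forall>y<z. \<exists>v. eval g (y # xs) v \<and> 0 < v)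
             \<Longrightarrow> eval (Mu g) xs z"

text \<open>Words over the alphabet {\<plusminus>1,...,\<plusminus>n}; the integer i > 0 stands for the
  generator x_i and -i for its inverse. Elements are freely reduced words.\<close>

fun red :: "int list \<Rightarrow> int list" where
  "red [] = []"
| "red (a # xs) = (case red xs of [] \<Rightarrow> [a] | b # ys \<Rightarrow> (if b = - a then ys else a # b # ys))"

definition reduced :: "int list \<Rightarrow> bool" where
  "reduced xs \<longleftrightarrow> (\<forall>i. Suc i < length xs \<longrightarrow> xs ! Suc i \<noteq> - (xs ! i))"

definition free_group :: "nat \<Rightarrow> int list monoid" where
  "free_group n = \<lparr> carrier = {xs. reduced xs \<and> (\<forall>a\<in>set xs. a \<noteq> 0 \<and> \<bar>a\<bar> \<le> int n)},
                    monoid.mult = (\<lambda>xs ys. red (xs @ ys)),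
                    monoid.one = [] \<rparr>"

definition OrdS :: "('a, 'b) monoid_scheme \<Rightarrow> 'a set \<Rightarrow> 'a \<Rightarrow> nat" where
  "OrdS G S g = (if \<exists>k::nat\<ge>1. g [^]\<^bsub>G\<^esub> k \<in> S then (LEAST k::nat. k \<ge> 1 \<and> g [^]\<^bsub>G\<^esub> k \<in> S) else 0)"

definition enc_word :: "int list \<Rightarrow> nat" where
  "enc_word xs = list_encode (map int_encode xs)"

definition enc_words :: "int list list \<Rightarrow> nat" where
  "enc_words gs = list_encode (map enc_word gs)"

end

theory Submission
  imports Defs
begin


definition cpt :: "nat \<Rightarrow> (nat list \<Rightarrow> nat) \<Rightarrow> bool" where
  "cpt k f \<longleftrightarrow> (\<exists>r. \<forall>xs. length xs = k \<longrightarrow> eval r xs (f xs))"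

lemma compI: "(\<And>xs. length xs = k \<Longrightarrow> eval r xs (f xs)) \<Longrightarrow> cpt k f"
  unfolding cpt_def by blast

lemma comp_cong: "cpt k f \<Longrightarrow> (\<And>xs. length xs = k \<Longrightarrow> f xs = g xs) \<Longrightarrow> cpt k g"
  unfolding cpt_def by metis

lemma comp_zero: "cpt k (\<lambda>xs. 0)"
  by (rule compI[where r=Zero]) (rule eval_Zero)

lemma comp_proj: "i < k \<Longrightarrow> cpt k (\<lambda>xs. xs ! i)"
  by (rule compI[where r="Proj i"]) (auto intro: eval_Proj)

lemma comp_list:
  assumes "\<forall>f\<in>set fs. cpt k f"
  shows "\<exists>rs. \<forall>xs. length xs = k \<longrightarrow> list_all2 (\<lambda>g y. eval g xs y) rs (map (\<lambda>f. f xs) fs)"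
  using assms
proof (induction fs)
  case Nil
  then show ?case by (intro exI[of _ "[]"]) auto
next
  case (Cons f fs)
  then obtain rs where rs: "\<forall>xs. length xs = k \<longrightarrow> list_all2 (\<lambda>g y. eval g xs y) rs (map (\<lambda>f. f xs) fs)" by auto
  from Cons.prems obtain r where r: "\<forall>xs. length xs = k \<longrightarrow> eval r xs (f xs)" unfolding cpt_def by auto
  show ?case using rs r by (intro exI[of _ "r # rs"]) auto
qed

lemma comp_compose:
  assumes "cpt m g" "\<forall>f\<in>set fs. cpt k f" "length fs = m"
  shows "cpt k (\<lambda>xs. g (map (\<lambda>f. f xs) fs))"
proof -
  obtain rs where rs: "\<forall>xs. length xs = k \<longrightarrow> list_all2 (\<lambda>g y. eval g xs y) rs (map (\<lambda>f. f xs) fs)"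
    using comp_list[OF assms(2)] by blast
  obtain rg where rg: "\<forall>xs. length xs = m \<longrightarrow> eval rg xs (g xs)" using assms(1) unfolding cpt_def by blast
  show ?thesis
    by (rule compI[where r="Comp rg rs"]) (use rs rg assms(3) in \<open>auto intro!: eval_Comp\<close>)
qed

lemma comp_compose1:
  assumes "cpt 1 (\<lambda>ys. F (ys!0))" "cpt k a"
  shows "cpt k (\<lambda>xs. F (a xs))"
  using comp_compose[OF assms(1), of "[a]" k] assms(2) by simp

lemma comp_compose2:
  assumes "cpt 2 (\<lambda>ys. F (ys!0) (ys!1))" "cpt k a" "cpt k b"
  shows "cpt k (\<lambda>xs. F (a xs) (b xs))"
  using comp_compose[OF assms(1), of "[a,b]" k] assms(2,3) by simp

lemma comp_compose3:
  assumes "cpt 3 (\<lambda>ys. F (ys!0) (ys!1) (ys!2))" "cpt k a" "cpt k b" "cpt k c"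
  shows "cpt k (\<lambda>xs. F (a xs) (b xs) (c xs))"
  using comp_compose[OF assms(1), of "[a,b,c]" k] assms(2-4) by simp

lemma comp_Suc1: "cpt 1 (\<lambda>ys. Suc (ys!0))"
proof (rule compI[where r=Succ])
  fix xs :: "nat list" assume "length xs = 1"
  then obtain x where "xs = [x]" by (cases xs) auto
  then show "eval Succ xs (Suc (xs!0))" by (auto intro: eval_Succ)
qed

lemma comp_Suc: "cpt k a \<Longrightarrow> cpt k (\<lambda>xs. Suc (a xs))"
  by (rule comp_compose1[OF comp_Suc1])

lemma comp_const: "cpt k (\<lambda>xs. c)"
  by (induction c) (auto intro: comp_zero comp_Suc)

fun nrec :: "(nat \<Rightarrow> nat \<Rightarrow> nat \<Rightarrow> nat) \<Rightarrow> nat \<Rightarrow> nat \<Rightarrow> nat \<Rightarrow> nat" where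
  "nrec f e z 0 = z"
| "nrec f e z (Suc i) = f e i (nrec f e z i)"

lemma eval_PrimRec_nrec:
  assumes f: "\<forall>xs. length xs = 2 \<longrightarrow> eval rf xs (xs!1)"
    and g: "\<forall>ys. length ys = 4 \<longrightarrow> eval rg ys (F (ys!2) (ys!1) (ys!0))"
  shows "eval (PrimRec rf rg) [m, e, z] (nrec F e z m)"
proof (induction m)
  case 0
  then show ?case using f[rule_format, of "[e,z]"] by (auto intro!: eval_PrimRec0)
next
  case (Suc m)
  show ?case
    by (rule eval_PrimRecS[OF Suc]) (use g[rule_format, of "[nrec F e z m, m, e, z]"] in simp)
qed

lemma comp_nrec3:
  assumes "cpt 3 (\<lambda>ys. F (ys!0) (ys!1) (ys!2))"
  shows "cpt 3 (\<lambda>ys. nrec F (ys!1) (ys!2) (ys!0))"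
proof -
  obtain rF where rF: "\<forall>ys. length ys = 3 \<longrightarrow> eval rF ys (F (ys!0) (ys!1) (ys!2))"
    using assms unfolding cpt_def by blast
  have g: "cpt 4 (\<lambda>ys. F (ys!2) (ys!1) (ys!0))"
    using comp_compose3[OF assms, of 4 "\<lambda>ys. ys!2" "\<lambda>ys. ys!1" "\<lambda>ys. ys!0"]
    by (simp add: comp_proj)
  then obtain rg where rg: "\<forall>ys. length ys = 4 \<longrightarrow> eval rg ys (F (ys!2) (ys!1) (ys!0))"
    unfolding cpt_def by blast
  have f: "\<forall>xs. length xs = 2 \<longrightarrow> eval (Proj 1) xs (xs!1)" by (auto intro: eval_Proj)
  show ?thesis
  proof (rule compI[where r="PrimRec (Proj 1) rg"])
    fix xs :: "nat list" assume "length xs = 3"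
    then obtain m e z where "xs = [m,e,z]"
      by (cases xs; cases "tl xs"; cases "tl (tl xs)") auto
    then show "eval (PrimRec (Proj 1) rg) xs (nrec F (xs!1) (xs!2) (xs!0))"
      using eval_PrimRec_nrec[OF f rg] by simp
  qed
qed

lemma comp_nrec:
  assumes "cpt 3 (\<lambda>ys. F (ys!0) (ys!1) (ys!2))" "cpt k e" "cpt k z" "cpt k n"
  shows "cpt k (\<lambda>xs. nrec F (e xs) (z xs) (n xs))"
  using comp_compose3[OF comp_nrec3[OF assms(1)] assms(4,2,3)] by simp

lemma eval_Mu_least:
  assumes "cpt (Suc k) p"
  shows "\<exists>r. \<forall>xs. length xs = k \<and> (\<exists>z. p (z # xs) = 0) \<longrightarrow> eval r xs (LEAST z. p (z # xs) = 0)"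
proof -
  obtain rp where rp: "\<forall>ys. length ys = Suc k \<longrightarrow> eval rp ys (p ys)" using assms unfolding cpt_def by blast
  show ?thesis
  proof (intro exI[of _ "Mu rp"] allI impI)
    fix xs :: "nat list" assume a: "length xs = k \<and> (\<exists>z. p (z # xs) = 0)"
    then have l: "p ((LEAST z. p (z # xs) = 0) # xs) = 0" by (metis (mono_tags) LeastI)
    show "eval (Mu rp) xs (LEAST z. p (z # xs) = 0)"
    proof (rule eval_Mu)
      show "eval rp ((LEAST z. p (z # xs) = 0) # xs) 0" using rp a l by (metis length_Cons)
      show "\<forall>y<(LEAST z. p (z # xs) = 0). \<exists>v. eval rp (y # xs) v \<and> 0 < v"
      proof (intro allI impI)
        fix y assume "y < (LEAST z. p (z # xs) = 0)"
        then have "p (y # xs) \<noteq> 0" by (rule not_less_Least)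
        then show "\<exists>v. eval rp (y # xs) v \<and> 0 < v" using rp[rule_format, of "y#xs"] a by auto
      qed
    qed
  qed
qed

lemma comp_mu:
  assumes "cpt (Suc k) p" "\<And>xs. length xs = k \<Longrightarrow> \<exists>z. p (z # xs) = 0"
  shows "cpt k (\<lambda>xs. LEAST z. p (z # xs) = 0)"
  using eval_Mu_least[OF assms(1)] assms(2) unfolding cpt_def by blast

lemma comp_add2: "cpt 2 (\<lambda>ys. ys!0 + ys!1)"
proof -
  have "cpt 3 (\<lambda>ys. Suc (ys!2))" by (rule comp_Suc[OF comp_proj]) simp
  then have "cpt 3 (\<lambda>ys. nrec (\<lambda>e i acc. Suc acc) (ys!1) (ys!2) (ys!0))"
    by (intro comp_nrec3) simp
  then have c: "cpt 2 (\<lambda>xs. nrec (\<lambda>e i acc. Suc acc) 0 (xs!1) (xs!0))"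
    using comp_compose3[of "\<lambda>n e z. nrec (\<lambda>e i acc. Suc acc) e z n" 2 "\<lambda>xs. xs!0" "\<lambda>xs. 0" "\<lambda>xs. xs!1"]
    by (simp add: comp_proj comp_zero)
  have "nrec (\<lambda>e i acc. Suc acc) e z m = m + z" for e z m by (induction m) auto
  with c show ?thesis by simp
qed

lemma comp_add[intro]: "cpt k a \<Longrightarrow> cpt k b \<Longrightarrow> cpt k (\<lambda>xs. a xs + b xs)"
  by (rule comp_compose2[OF comp_add2])

lemma comp_sub2: "cpt 2 (\<lambda>ys. ys!0 - ys!1)"
proof -
  have p: "cpt 3 (\<lambda>ys. nrec (\<lambda>e i acc. i) (ys!1) (ys!2) (ys!0))"
    by (intro comp_nrec3 comp_proj) simp
  have pr: "nrec (\<lambda>e i acc. i) e 0 m = m - 1" for e m by (induction m) auto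
  have "cpt 3 (\<lambda>ys. ys!2 - 1)" using comp_compose3[OF p, of 3 "\<lambda>ys. ys!2" "\<lambda>ys. 0" "\<lambda>ys. 0"]
    by (simp add: pr comp_proj comp_zero)
  then have q: "cpt 3 (\<lambda>ys. nrec (\<lambda>e i acc. acc - 1) (ys!1) (ys!2) (ys!0))"
    by (intro comp_nrec3) simp
  have qr: "nrec (\<lambda>e i acc. acc - 1) e z m = z - m" for e z m by (induction m) auto
  have "cpt 2 (\<lambda>ys. nrec (\<lambda>e i acc. acc - 1) 0 (ys!0) (ys!1))"
    using comp_compose3[OF q, of 2 "\<lambda>ys. ys!1" "\<lambda>ys. 0" "\<lambda>ys. ys!0"] by (simp add: comp_proj comp_zero)
  then show ?thesis by (rule comp_cong) (simp only: qr)
qed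

lemma comp_sub[intro]: "cpt k a \<Longrightarrow> cpt k b \<Longrightarrow> cpt k (\<lambda>xs. a xs - b xs)"
  by (rule comp_compose2[OF comp_sub2])

lemma comp_mult2: "cpt 2 (\<lambda>ys. ys!0 * ys!1)"
proof -
  have "cpt 3 (\<lambda>ys. ys!2 + ys!0)" by (intro comp_add comp_proj) auto
  then have q: "cpt 3 (\<lambda>ys. nrec (\<lambda>e i acc. acc + e) (ys!1) (ys!2) (ys!0))"
    by (intro comp_nrec3) simp
  have qr: "nrec (\<lambda>e i acc. acc + e) e 0 m = m * e" for e m by (induction m) auto
  show ?thesis using comp_compose3[OF q, of 2 "\<lambda>ys. ys!0" "\<lambda>ys. ys!1" "\<lambda>ys. 0"]
    by (simp add: qr comp_proj comp_zero)
qed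

lemma comp_mult[intro]: "cpt k a \<Longrightarrow> cpt k b \<Longrightarrow> cpt k (\<lambda>xs. a xs * b xs)"
  by (rule comp_compose2[OF comp_mult2])

definition compP :: "nat \<Rightarrow> (nat list \<Rightarrow> bool) \<Rightarrow> bool" where
  "compP k P \<longleftrightarrow> cpt k (\<lambda>xs. if P xs then 1 else 0)"

lemma compP_le[intro]: "cpt k a \<Longrightarrow> cpt k b \<Longrightarrow> compP k (\<lambda>xs. a xs \<le> b xs)"
  unfolding compP_def
  by (rule comp_cong[where f="\<lambda>xs. 1 - (a xs - b xs)"]) (auto intro!: comp_sub comp_const)

lemma compP_not[intro]: "compP k P \<Longrightarrow> compP k (\<lambda>xs. \<not> P xs)"
  unfolding compP_def
  by (rule comp_cong[where f="\<lambda>xs. 1 - (if P xs then 1 else 0)"]) (auto intro: comp_const)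

lemma compP_and[intro]: "compP k P \<Longrightarrow> compP k Q \<Longrightarrow> compP k (\<lambda>xs. P xs \<and> Q xs)"
  unfolding compP_def
  by (rule comp_cong[where f="\<lambda>xs. (if P xs then 1 else 0) * (if Q xs then 1 else 0)"]) auto

lemma compP_or[intro]: "compP k P \<Longrightarrow> compP k Q \<Longrightarrow> compP k (\<lambda>xs. P xs \<or> Q xs)"
proof -
  assume a: "compP k P" "compP k Q"
  have "compP k (\<lambda>xs. \<not> (\<not> P xs \<and> \<not> Q xs))"
    by (intro compP_not compP_and a)
  then show ?thesis by simp
qed

lemma compP_imp[intro]: "compP k P \<Longrightarrow> compP k Q \<Longrightarrow> compP k (\<lambda>xs. P xs \<longrightarrow> Q xs)"
  using compP_or[OF compP_not] by (simp only: imp_conv_disj)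

lemma compP_less[intro]: "cpt k a \<Longrightarrow> cpt k b \<Longrightarrow> compP k (\<lambda>xs. a xs < b xs)"
  using compP_not[OF compP_le[of k b a]] by (simp add: not_le)

lemma compP_eq[intro]: "cpt k a \<Longrightarrow> cpt k b \<Longrightarrow> compP k (\<lambda>xs. a xs = b xs)"
  using compP_and[OF compP_le[of k a b] compP_le[of k b a]] by (simp add: eq_iff)

lemma compP_const[intro]: "compP k (\<lambda>xs. c)"
  unfolding compP_def by (rule comp_const)

lemma comp_if[intro]:
  assumes "compP k P" "cpt k a" "cpt k b"
  shows "cpt k (\<lambda>xs. if P xs then a xs else b xs)"
proof (rule comp_cong[where f="\<lambda>xs. (if P xs then 1 else 0) * a xs + (1 - (if P xs then 1 else 0)) * b xs"])
  have p: "cpt k (\<lambda>xs. if P xs then 1 else 0)" using assms(1) unfolding compP_def .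
  show "cpt k (\<lambda>xs. (if P xs then 1 else 0) * a xs + (1 - (if P xs then 1 else 0)) * b xs)"
    by (intro comp_add comp_mult comp_sub comp_const p assms(2,3))
qed auto

lemma comp_triangle: "cpt k a \<Longrightarrow> cpt k (\<lambda>xs. triangle (a xs))"
proof -
  have "cpt 3 (\<lambda>ys. ys!2 + Suc (ys!1))" by (intro comp_add comp_Suc comp_proj) auto
  then have q: "cpt k (\<lambda>xs. nrec (\<lambda>e i acc. acc + Suc i) 0 0 (a xs))" if "cpt k a" for a
    using that by (intro comp_nrec comp_const) auto
  have qr: "nrec (\<lambda>e i acc. acc + Suc i) e 0 m = triangle m" for e m by (induction m) auto
  show "cpt k a \<Longrightarrow> ?thesis" using q qr by simp
qed

definition pair :: "nat \<Rightarrow> nat \<Rightarrow> nat" where "pair a b = prod_encode (a, b)"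
definition pfst :: "nat \<Rightarrow> nat" where "pfst x = fst (prod_decode x)"
definition psnd :: "nat \<Rightarrow> nat" where "psnd x = snd (prod_decode x)"

lemma pfst_pair[simp]: "pfst (pair a b) = a" and psnd_pair[simp]: "psnd (pair a b) = b"
  by (auto simp: pair_def pfst_def psnd_def)

lemma pair_eq_iff[simp]: "pair a b = pair c d \<longleftrightarrow> a = c \<and> b = d"
  by (auto simp: pair_def)

lemma pair_surj: "pair (pfst x) (psnd x) = x"
  by (simp add: pair_def pfst_def psnd_def)

lemma comp_pair[intro]: "cpt k a \<Longrightarrow> cpt k b \<Longrightarrow> cpt k (\<lambda>xs. pair (a xs) (b xs))"
  unfolding pair_def prod_encode_def
  by (simp, intro comp_add comp_triangle) auto

lemma pair_unfold: "x = triangle (pfst x + psnd x) + pfst x"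
  using pair_surj[of x] by (simp add: pair_def prod_encode_def)

lemma triangle_mono: "m \<le> n \<Longrightarrow> triangle m \<le> triangle n"
  by (induction n) (auto simp: le_Suc_eq)

lemma decode_char:
  "(LEAST s. x < triangle (Suc s)) = pfst x + psnd x"
proof -
  let ?a = "pfst x" and ?b = "psnd x"
  have x: "x = triangle (?a + ?b) + ?a" by (rule pair_unfold)
  have 1: "x < triangle (Suc (?a + ?b))" using x by simp
  have 2: "\<not> x < triangle (Suc s)" if "s < ?a + ?b" for s
    using triangle_mono[of "Suc s" "?a + ?b"] that x by simp
  show ?thesis
    by (rule Least_equality) (use 1 2 in \<open>force, meson not_less\<close>)
qed

lemma triangle_ge: "n \<le> triangle n"
  by (induction n) auto

lemma comp_decsum: "cpt 1 (\<lambda>ys. pfst (ys!0) + psnd (ys!0))"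
proof -
  define p where "p = (\<lambda>ys::nat list. if ys!1 < triangle (Suc (ys!0)) then 0 else (1::nat))"
  have c: "cpt (Suc 1) p" unfolding p_def
    by (intro comp_if compP_less comp_proj comp_triangle comp_Suc comp_const) auto
  have ex: "\<exists>z. p (z # xs) = 0" if "length xs = 1" for xs
    using triangle_ge[of "Suc (xs!0)"] by (intro exI[of _ "xs!0"]) (auto simp: p_def)
  from comp_mu[OF c ex] have "cpt 1 (\<lambda>xs. LEAST z. p (z # xs) = 0)" .
  then show ?thesis by (rule comp_cong) (simp add: p_def decode_char[symmetric])
qed

lemma comp_pfst[intro]: "cpt k a \<Longrightarrow> cpt k (\<lambda>xs. pfst (a xs))"
proof -
  have "cpt 1 (\<lambda>ys. ys!0 - triangle (pfst (ys!0) + psnd (ys!0)))"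
    by (intro comp_sub comp_triangle comp_proj comp_decsum) auto
  then have "cpt 1 (\<lambda>ys. pfst (ys!0))"
    by (rule comp_cong) (metis add_diff_cancel_left' pair_unfold)
  then show "cpt k a \<Longrightarrow> ?thesis" by (rule comp_compose1)
qed

lemma comp_psnd[intro]: "cpt k a \<Longrightarrow> cpt k (\<lambda>xs. psnd (a xs))"
proof -
  have "cpt 1 (\<lambda>ys. (pfst (ys!0) + psnd (ys!0)) - pfst (ys!0))"
    by (intro comp_sub comp_pfst comp_proj comp_decsum) auto
  then have "cpt 1 (\<lambda>ys. psnd (ys!0))" by simp
  then show "cpt k a \<Longrightarrow> ?thesis" by (rule comp_compose1)
qed

lemmas comp_basic = comp_proj comp_const comp_Suc comp_add comp_sub comp_mult comp_if comp_pair comp_pfst comp_psnd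
  compP_le compP_less compP_eq compP_not compP_and compP_or compP_imp compP_const comp_nrec



lemma compP_ifb[intro]: "compP k P \<Longrightarrow> compP k Q \<Longrightarrow> compP k R \<Longrightarrow> compP k (\<lambda>xs. if P xs then Q xs else R xs)"
proof -
  assume a: "compP k P" "compP k Q" "compP k R"
  have "compP k (\<lambda>xs. (P xs \<and> Q xs) \<or> (\<not> P xs \<and> R xs))" by (intro compP_or compP_and compP_not a)
  then show ?thesis by (simp add: if_bool_eq_disj)
qed

definition lcons :: "nat \<Rightarrow> nat \<Rightarrow> nat" where "lcons x c = Suc (pair x c)"
definition lhd :: "nat \<Rightarrow> nat" where "lhd c = pfst (c - 1)"
definition ltl :: "nat \<Rightarrow> nat" where "ltl c = psnd (c - 1)"

lemma lhd_lcons[simp]: "lhd (lcons x c) = x" and ltl_lcons[simp]: "ltl (lcons x c) = c"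
  and lcons_nz[simp]: "lcons x c \<noteq> 0"
  by (auto simp: lhd_def ltl_def lcons_def)

lemma lhd_0[simp]: "lhd 0 = 0" and ltl_0[simp]: "ltl 0 = 0"
  by (auto simp: lhd_def ltl_def pfst_def psnd_def prod_decode_def prod_decode_aux.simps)

lemma lcons_eq_iff[simp]: "lcons x c = lcons y d \<longleftrightarrow> x = y \<and> c = d"
  by (auto simp: lcons_def)

lemma list_encode_Cons[simp]: "list_encode (x # xs) = lcons x (list_encode xs)"
  by (simp add: lcons_def pair_def)

declare list_encode.simps(2)[simp del]

lemma comp_lcons[intro]: "cpt k a \<Longrightarrow> cpt k b \<Longrightarrow> cpt k (\<lambda>xs. lcons (a xs) (b xs))"
  unfolding lcons_def by (intro comp_basic)
lemma comp_lhd[intro]: "cpt k a \<Longrightarrow> cpt k (\<lambda>xs. lhd (a xs))"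
  unfolding lhd_def by (intro comp_basic)
lemma comp_ltl[intro]: "cpt k a \<Longrightarrow> cpt k (\<lambda>xs. ltl (a xs))"
  unfolding ltl_def by (intro comp_basic)

lemma length_le_list_encode: "length xs \<le> list_encode xs"
proof (induction xs)
  case (Cons x xs)
  then show ?case using le_prod_encode_2[of "list_encode xs" x] by (simp add: lcons_def pair_def)
qed simp

lemma nrec_funpow: "nrec (\<lambda>e i st. g e st) e z n = (g e ^^ n) z"
  by (induction n) auto

definition lstep :: "(nat \<Rightarrow> nat \<Rightarrow> nat \<Rightarrow> nat) \<Rightarrow> nat \<Rightarrow> nat \<Rightarrow> nat" where
  "lstep f e st = (if psnd st = 0 then st else pair (f e (lhd (psnd st)) (pfst st)) (ltl (psnd st)))"

definition lfold :: "(nat \<Rightarrow> nat \<Rightarrow> nat \<Rightarrow> nat) \<Rightarrow> nat \<Rightarrow> nat \<Rightarrow> nat \<Rightarrow> nat" where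
  "lfold f e a c = pfst (nrec (\<lambda>e i st. lstep f e st) e (pair a c) c)"

lemma lstep_stop: "(lstep f e ^^ m) (pair a 0) = pair a 0"
  by (induction m) (auto simp: lstep_def)

lemma lstep_run: "(lstep f e ^^ length xs) (pair a (list_encode xs)) = pair (foldl (\<lambda>acc x. f e x acc) a xs) 0"
proof (induction xs arbitrary: a)
  case (Cons x xs)
  have "lstep f e (pair a (list_encode (x # xs))) = pair (f e x a) (list_encode xs)"
    by (simp add: lstep_def list_encode_Cons)
  then show ?case using Cons by (simp add: funpow_Suc_right del: funpow.simps)
qed simp

lemma lfold_correct[simp]: "lfold f e a (list_encode xs) = foldl (\<lambda>acc x. f e x acc) a xs"
proof -
  have n: "list_encode xs = (list_encode xs - length xs) + length xs" using length_le_list_encode[of xs] by simp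
  have "(lstep f e ^^ list_encode xs) (pair a (list_encode xs)) = pair (foldl (\<lambda>acc x. f e x acc) a xs) 0"
    by (subst n, subst funpow_add) (simp add: lstep_run lstep_stop)
  then show ?thesis by (simp add: lfold_def nrec_funpow)
qed

lemma comp_lfold[intro]:
  assumes f: "cpt 3 (\<lambda>ys. f (ys!0) (ys!1) (ys!2))" and "cpt k e" "cpt k a" "cpt k c"
  shows "cpt k (\<lambda>xs. lfold f (e xs) (a xs) (c xs))"
proof -
  have p2: "cpt 3 (\<lambda>ys. ys!2)" and p0: "cpt 3 (\<lambda>ys. ys!0)" by (auto intro: comp_proj)
  have f': "cpt 3 (\<lambda>ys. f (ys!0) (lhd (psnd (ys!2))) (pfst (ys!2)))"
    by (rule comp_compose3[OF f p0 comp_lhd[OF comp_psnd[OF p2]] comp_pfst[OF p2]])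
  show ?thesis
    unfolding lfold_def lstep_def
    by (intro comp_basic comp_lhd comp_ltl assms(2-4) f' p2)
qed

lemma lfold_all: "lfold (\<lambda>e x acc. if acc \<noteq> 0 \<and> P e x then 1 else 0) e 1 (list_encode xs)
   = (if \<forall>x\<in>set xs. P e x then 1 else 0)"
proof -
  have "foldl (\<lambda>acc x. if acc \<noteq> 0 \<and> P e x then 1 else 0) b xs = (if b \<noteq> 0 \<and> (\<forall>x\<in>set xs. P e x) then 1 else 0)" if "b \<le> 1" for b :: nat
    using that by (induction xs arbitrary: b) auto
  then show ?thesis by simp
qed

lemma lfold_ex: "lfold (\<lambda>e x acc. if acc \<noteq> 0 \<or> P e x then 1 else 0) e 0 (list_encode xs)
   = (if \<exists>x\<in>set xs. P e x then 1 else 0)"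
proof -
  have "foldl (\<lambda>acc x. if acc \<noteq> 0 \<or> P e x then 1 else 0) b xs = (if b \<noteq> 0 \<or> (\<exists>x\<in>set xs. P e x) then 1 else 0)" if "b \<le> 1" for b :: nat
    using that by (induction xs arbitrary: b) auto
  then show ?thesis by simp
qed

lemma if10: "((if P then 1 else 0) \<noteq> (0::nat)) = P" by simp

definition ball_c :: "(nat \<Rightarrow> nat \<Rightarrow> bool) \<Rightarrow> nat \<Rightarrow> nat \<Rightarrow> nat" where
  "ball_c P e c = lfold (\<lambda>e x acc. if acc \<noteq> 0 \<and> P e x then 1 else 0) e 1 c"
definition bex_c :: "(nat \<Rightarrow> nat \<Rightarrow> bool) \<Rightarrow> nat \<Rightarrow> nat \<Rightarrow> nat" where
  "bex_c P e c = lfold (\<lambda>e x acc. if acc \<noteq> 0 \<or> P e x then 1 else 0) e 0 c"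

lemma ball_c_correct[simp]: "ball_c P e (list_encode xs) = (if \<forall>x\<in>set xs. P e x then 1 else 0)"
  unfolding ball_c_def by (rule lfold_all)
lemma bex_c_correct[simp]: "bex_c P e (list_encode xs) = (if \<exists>x\<in>set xs. P e x then 1 else 0)"
  unfolding bex_c_def by (rule lfold_ex)

lemma compP_compose2:
  assumes "compP 2 (\<lambda>ys. P (ys!0) (ys!1))" "cpt k a" "cpt k b"
  shows "compP k (\<lambda>xs. P (a xs) (b xs))"
  using comp_compose2[of "\<lambda>x y. if P x y then 1 else 0", OF assms[unfolded compP_def]]
  unfolding compP_def by simp

lemma comp_ball_c[intro]:
  assumes "compP 2 (\<lambda>ys. P (ys!0) (ys!1))" "cpt k e" "cpt k c"
  shows "cpt k (\<lambda>xs. ball_c P (e xs) (c xs))"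
proof -
  have "compP 3 (\<lambda>ys. P (ys!0) (ys!1))" by (rule compP_compose2[OF assms(1)]) (auto intro: comp_proj)
  then show ?thesis unfolding ball_c_def by (intro comp_basic comp_lfold assms(2,3)) simp_all
qed

lemma comp_bex_c[intro]:
  assumes "compP 2 (\<lambda>ys. P (ys!0) (ys!1))" "cpt k e" "cpt k c"
  shows "cpt k (\<lambda>xs. bex_c P (e xs) (c xs))"
proof -
  have "compP 3 (\<lambda>ys. P (ys!0) (ys!1))" by (rule compP_compose2[OF assms(1)]) (auto intro: comp_proj)
  then show ?thesis unfolding bex_c_def by (intro comp_basic comp_lfold assms(2,3)) simp_all
qed

definition lnth :: "nat \<Rightarrow> nat \<Rightarrow> nat" where
  "lnth c i = lhd (nrec (\<lambda>e j acc. ltl acc) 0 c i)"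

lemma comp_lnth[intro]: "cpt k a \<Longrightarrow> cpt k b \<Longrightarrow> cpt k (\<lambda>xs. lnth (a xs) (b xs))"
  unfolding lnth_def by (intro comp_basic comp_lhd comp_ltl) simp_all

lemma lnth_correct: "lnth (list_encode xs) i = (if i < length xs then xs ! i else 0)"
proof -
  have "(ltl ^^ i) (list_encode xs) = list_encode (drop i xs)"
  proof (induction i arbitrary: xs)
    case (Suc i)
    then show ?case by (cases xs) (use Suc.IH[of "[]"] in \<open>auto simp: funpow_Suc_right simp del: funpow.simps\<close>)
  qed simp
  moreover have "lhd (list_encode (drop i xs)) = (if i < length xs then xs ! i else 0)"
    by (cases "i < length xs") (simp_all add: Cons_nth_drop_Suc[symmetric])
  ultimately show ?thesis unfolding lnth_def nrec_funpow[of "\<lambda>e. ltl"] by simp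
qed

definition llen :: "nat \<Rightarrow> nat" where "llen c = lfold (\<lambda>e x acc. Suc acc) 0 0 c"

lemma comp_llen[intro]: "cpt k a \<Longrightarrow> cpt k (\<lambda>xs. llen (a xs))"
  unfolding llen_def by (intro comp_basic comp_lfold) simp_all

lemma llen_correct[simp]: "llen (list_encode xs) = length xs"
proof -
  have "foldl (\<lambda>acc x. Suc acc) b xs = b + length xs" for b by (induction xs arbitrary: b) auto
  then show ?thesis by (simp add: llen_def)
qed

definition negc :: "nat \<Rightarrow> nat" where
  "negc x = (if x = 0 then 0 else if x mod 2 = 0 then x - 1 else x + 1)"

lemma comp_mod2[intro]: "cpt k a \<Longrightarrow> cpt k (\<lambda>xs. a xs mod 2)"
proof -
  have r: "nrec (\<lambda>e i acc. 1 - acc) 0 0 x = x mod 2" for x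
    by (induction x) (auto simp: mod_Suc)
  assume "cpt k a"
  then have "cpt k (\<lambda>xs. nrec (\<lambda>e i acc. 1 - acc) 0 0 (a xs))"
    by (intro comp_basic) simp_all
  then show ?thesis by (rule comp_cong) (simp only: r)
qed

lemma comp_negc[intro]: "cpt k a \<Longrightarrow> cpt k (\<lambda>xs. negc (a xs))"
  unfolding negc_def by (intro comp_basic comp_mod2)

lemma negc_correct[simp]: "negc (int_encode a) = int_encode (- a)"
  by (cases "a > 0"; cases "a = 0") (auto simp: negc_def int_encode_def sum_encode_def nat_diff_distrib)

definition lrev :: "nat \<Rightarrow> nat" where "lrev c = lfold (\<lambda>e x acc. lcons x acc) 0 0 c"
definition lapp :: "nat \<Rightarrow> nat \<Rightarrow> nat" where "lapp a b = lfold (\<lambda>e x acc. lcons x acc) 0 b (lrev a)"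
definition linv :: "nat \<Rightarrow> nat" where "linv c = lfold (\<lambda>e x acc. lcons (negc x) acc) 0 0 c"
definition redstep_c :: "nat \<Rightarrow> nat \<Rightarrow> nat" where
  "redstep_c x acc = (if acc = 0 then lcons x 0 else if lhd acc = negc x then ltl acc else lcons x acc)"
definition lred :: "nat \<Rightarrow> nat" where "lred c = lfold (\<lambda>e x acc. redstep_c x acc) 0 0 (lrev c)"
definition lpow :: "nat \<Rightarrow> nat \<Rightarrow> nat" where "lpow w k = nrec (\<lambda>e i acc. lapp e acc) w 0 k"

lemma comp_lrev[intro]: "cpt k a \<Longrightarrow> cpt k (\<lambda>xs. lrev (a xs))"
  unfolding lrev_def by (intro comp_basic comp_lfold comp_lcons) simp_all
lemma comp_lapp[intro]: "cpt k a \<Longrightarrow> cpt k b \<Longrightarrow> cpt k (\<lambda>xs. lapp (a xs) (b xs))"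
  unfolding lapp_def by (intro comp_basic comp_lfold comp_lcons comp_lrev) simp_all
lemma comp_linv[intro]: "cpt k a \<Longrightarrow> cpt k (\<lambda>xs. linv (a xs))"
  unfolding linv_def by (intro comp_basic comp_lfold comp_lcons comp_negc) simp_all
lemma comp_lred[intro]: "cpt k a \<Longrightarrow> cpt k (\<lambda>xs. lred (a xs))"
  unfolding lred_def redstep_c_def by (intro comp_basic comp_lfold comp_lcons comp_negc comp_lhd comp_ltl comp_lrev) simp_all
lemma comp_lpow[intro]: "cpt k a \<Longrightarrow> cpt k b \<Longrightarrow> cpt k (\<lambda>xs. lpow (a xs) (b xs))"
  unfolding lpow_def by (intro comp_basic comp_lapp) simp_all

lemma lrev_correct[simp]: "lrev (list_encode xs) = list_encode (rev xs)"
proof -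
  have "foldl (\<lambda>acc x. lcons x acc) (list_encode b) xs = list_encode (rev xs @ b)" for b
  proof (induction xs arbitrary: b)
    case (Cons a xs) then show ?case using Cons.IH[of "a#b"] by simp
  qed simp
  from this[of "[]"] show ?thesis by (simp add: lrev_def)
qed

lemma lapp_correct[simp]: "lapp (list_encode xs) (list_encode ys) = list_encode (xs @ ys)"
proof -
  have "foldl (\<lambda>acc x. lcons x acc) (list_encode b) xs = list_encode (rev xs @ b)" for b xs
  proof (induction xs arbitrary: b)
    case (Cons a xs) then show ?case using Cons.IH[of "a#b"] by simp
  qed simp
  from this[of ys "rev xs"] show ?thesis by (simp add: lapp_def)
qed

lemma enc_word_Cons: "enc_word (a # xs) = lcons (int_encode a) (enc_word xs)"
  by (simp add: enc_word_def)

lemma enc_word_Nil[simp]: "enc_word [] = 0"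
  by (simp add: enc_word_def)

lemma enc_word_inj[simp]: "enc_word xs = enc_word ys \<longleftrightarrow> xs = ys"
  by (auto simp: enc_word_def list_encode_eq inj_int_encode inj_map_eq_map)

lemma lrev_word[simp]: "lrev (enc_word xs) = enc_word (rev xs)"
  by (simp add: enc_word_def rev_map)

lemma lapp_word[simp]: "lapp (enc_word xs) (enc_word ys) = enc_word (xs @ ys)"
  by (simp add: enc_word_def)

lemma linv_word[simp]: "linv (enc_word xs) = enc_word (rev (map uminus xs))"
proof -
  have "foldl (\<lambda>acc x. lcons (negc x) acc) (enc_word b) (map int_encode xs) = enc_word (rev (map uminus xs) @ b)" for b
    by (induction xs arbitrary: b) (auto simp: enc_word_Cons[symmetric])
  from this[of "[]"] show ?thesis by (simp add: linv_def enc_word_def[of xs])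
qed

fun redstep :: "int \<Rightarrow> int list \<Rightarrow> int list" where
  "redstep a [] = [a]"
| "redstep a (b # ys) = (if b = - a then ys else a # b # ys)"

lemma red_Cons: "red (a # xs) = redstep a (red xs)"
  by (cases "red xs") auto

lemma redstep_c_word: "redstep_c (int_encode a) (enc_word r) = enc_word (redstep a r)"
  by (cases r) (auto simp: redstep_c_def enc_word_Cons int_encode_eq)

lemma lred_word[simp]: "lred (enc_word xs) = enc_word (red xs)"
proof -
  have A: "foldl (\<lambda>acc x. redstep_c x acc) (enc_word b) (map int_encode (rev ys)) = enc_word (foldr redstep ys b)" for ys b
    by (induction ys arbitrary: b rule: rev_induct) (auto simp: redstep_c_word)
  have B: "foldr redstep xs [] = red xs" by (induction xs) (simp_all del: red.simps(2) add: red_Cons)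
  show ?thesis
    using A[of "[]" xs] B by (simp add: lred_def enc_word_def[of xs] rev_map)
qed

lemma lpow_word[simp]: "lpow (enc_word xs) k = enc_word (concat (replicate k xs))"
  by (induction k) (auto simp: lpow_def)

type_synonym edge = "nat \<times> int \<times> nat"

definition ecode :: "edge \<Rightarrow> nat" where
  "ecode e = (case e of (s, a, t) \<Rightarrow> pair s (pair (int_encode a) t))"
definition edec :: "nat \<Rightarrow> edge" where
  "edec e = (pfst e, int_decode (pfst (psnd e)), psnd (psnd e))"
definition Edec :: "nat \<Rightarrow> edge list" where
  "Edec c = map edec (list_decode c)"
definition Ecode :: "edge list \<Rightarrow> nat" where
  "Ecode L = list_encode (map ecode L)"

lemma ecode_edec[simp]: "ecode (edec e) = e"
  by (simp add: ecode_def edec_def pair_surj)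

lemma Ecode_Edec[simp]: "Ecode (Edec c) = c"
  by (simp add: Ecode_def Edec_def comp_def)

fun lookup :: "edge list \<Rightarrow> nat \<Rightarrow> int \<Rightarrow> nat option" where
  "lookup [] s a = None"
| "lookup ((s', a', t) # L) s a = (if s' = s \<and> a' = a then Some t else lookup L s a)"

fun follow :: "edge list \<Rightarrow> nat \<Rightarrow> int list \<Rightarrow> nat option" where
  "follow L s [] = Some s"
| "follow L s (a # w) = (case lookup L s a of None \<Rightarrow> None | Some t \<Rightarrow> follow L t w)"

definition lookup_c :: "nat \<Rightarrow> nat \<Rightarrow> nat \<Rightarrow> nat" where
  "lookup_c E st x = lfold (\<lambda>e ed acc. if acc \<noteq> 0 then acc else
      if pfst ed = pfst e \<and> pfst (psnd ed) = psnd e then Suc (psnd (psnd ed)) else 0) (pair st x) 0 E"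

definition follow_c :: "nat \<Rightarrow> nat \<Rightarrow> nat \<Rightarrow> nat" where
  "follow_c E st c = lfold (\<lambda>E x st. if st = 0 then 0 else lookup_c E (st - 1) x) E st c"

lemma comp_lookup_c[intro]: "cpt k a \<Longrightarrow> cpt k b \<Longrightarrow> cpt k c \<Longrightarrow> cpt k (\<lambda>xs. lookup_c (a xs) (b xs) (c xs))"
  unfolding lookup_c_def by (intro comp_basic comp_lfold) simp_all

lemma comp_follow_c[intro]: "cpt k a \<Longrightarrow> cpt k b \<Longrightarrow> cpt k c \<Longrightarrow> cpt k (\<lambda>xs. follow_c (a xs) (b xs) (c xs))"
  unfolding follow_c_def by (intro comp_basic comp_lfold comp_lookup_c) simp_all

lemma lookup_c_correct: "lookup_c (Ecode L) s (int_encode a) = (case lookup L s a of None \<Rightarrow> 0 | Some t \<Rightarrow> Suc t)"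
proof -
  let ?e = "pair s (int_encode a)"
  have "foldl (\<lambda>acc ed. if acc \<noteq> 0 then acc else
      if pfst ed = pfst ?e \<and> pfst (psnd ed) = psnd ?e then Suc (psnd (psnd ed)) else 0) b (map ecode L)
      = (if b \<noteq> 0 then b else (case lookup L s a of None \<Rightarrow> 0 | Some t \<Rightarrow> Suc t))" for b
  proof (induction L arbitrary: b)
    case (Cons e L)
    obtain s' a' t where e: "e = (s', a', t)" by (cases e)
    show ?case using Cons by (auto simp: e ecode_def int_encode_eq)
  qed simp
  from this[of 0] show ?thesis unfolding lookup_c_def Ecode_def lfold_correct by simp
qed

lemma follow_c_correct: "follow_c (Ecode L) (Suc s) (enc_word w) = (case follow L s w of None \<Rightarrow> 0 | Some t \<Rightarrow> Suc t)"
proof -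
  let ?g = "\<lambda>st x. if st = 0 then 0 else lookup_c (Ecode L) (st - 1) x"
  have z: "foldl ?g 0 ys = 0" for ys by (induction ys) auto
  have "foldl ?g (Suc s) (map int_encode w) = (case follow L s w of None \<Rightarrow> 0 | Some t \<Rightarrow> Suc t)"
  proof (induction w arbitrary: s)
    case (Cons a w)
    show ?case
    proof (cases "lookup L s a")
      case None then show ?thesis by (simp add: lookup_c_correct z)
    next
      case (Some t) then show ?thesis using Cons[of t] by (simp add: lookup_c_correct)
    qed
  qed simp
  then show ?thesis by (simp add: follow_c_def enc_word_def)
qed

definition memb_c :: "nat \<Rightarrow> nat \<Rightarrow> nat" where
  "memb_c E y = bex_c (\<lambda>y x. x = y) y E"

lemma comp_memb_c[intro]: "cpt k a \<Longrightarrow> cpt k b \<Longrightarrow> cpt k (\<lambda>xs. memb_c (a xs) (b xs))"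
  unfolding memb_c_def by (intro comp_basic comp_bex_c) simp_all

lemma memb_c_correct: "memb_c (list_encode xs) y = (if y \<in> set xs then 1 else 0)"
  unfolding memb_c_def by auto

definition closed_c :: "nat \<Rightarrow> nat" where
  "closed_c E = ball_c (\<lambda>E ed. memb_c E (pair (psnd (psnd ed)) (pair (negc (pfst (psnd ed))) (pfst ed))) \<noteq> 0) E E"

definition det_c :: "nat \<Rightarrow> nat" where
  "det_c E = ball_c (\<lambda>E ed. ball_c (\<lambda>ed ed'. (pfst ed = pfst ed' \<and> pfst (psnd ed) = pfst (psnd ed'))
               \<longrightarrow> psnd (psnd ed) = psnd (psnd ed')) ed E \<noteq> 0) E E"

lemma comp_closed_c[intro]: "cpt k a \<Longrightarrow> cpt k (\<lambda>xs. closed_c (a xs))"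
  unfolding closed_c_def by (intro comp_basic comp_ball_c comp_memb_c comp_negc) simp_all

lemma comp_det_c[intro]: "cpt k a \<Longrightarrow> cpt k (\<lambda>xs. det_c (a xs))"
  unfolding det_c_def by (intro comp_basic comp_ball_c) simp_all

definition eclosed :: "edge list \<Rightarrow> bool" where
  "eclosed L \<longleftrightarrow> (\<forall>s a t. (s, a, t) \<in> set L \<longrightarrow> (t, -a, s) \<in> set L)"

definition edet :: "edge list \<Rightarrow> bool" where
  "edet L \<longleftrightarrow> (\<forall>s a t t'. (s, a, t) \<in> set L \<longrightarrow> (s, a, t') \<in> set L \<longrightarrow> t = t')"

lemma ecode_inj: "ecode x = ecode y \<longleftrightarrow> x = y"
  by (cases x; cases y) (auto simp: ecode_def int_encode_eq)

lemma closed_c_correct: "closed_c (Ecode L) \<noteq> 0 \<longleftrightarrow> eclosed L"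
proof -
  have e: "pair (psnd (psnd (ecode x))) (pair (negc (pfst (psnd (ecode x)))) (pfst (ecode x))) = ecode (snd (snd x), - fst (snd x), fst x)" for x
    by (cases x) (simp add: ecode_def)
  have "closed_c (Ecode L) \<noteq> 0 \<longleftrightarrow> (\<forall>x\<in>set L. memb_c (Ecode L) (pair (psnd (psnd (ecode x))) (pair (negc (pfst (psnd (ecode x)))) (pfst (ecode x)))) \<noteq> 0)"
    by (simp add: closed_c_def Ecode_def)
  also have "\<dots> \<longleftrightarrow> (\<forall>x\<in>set L. (snd (snd x), - fst (snd x), fst x) \<in> set L)"
    by (simp only: e) (simp add: Ecode_def memb_c_correct ecode_inj image_iff)
  also have "\<dots> \<longleftrightarrow> eclosed L"
    unfolding eclosed_def by force
  finally show ?thesis .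
qed

lemma det_c_correct: "det_c (Ecode L) \<noteq> 0 \<longleftrightarrow> edet L"
proof -
  have q: "(pfst (ecode x) = pfst (ecode y) \<and> pfst (psnd (ecode x)) = pfst (psnd (ecode y)) \<longrightarrow>
      psnd (psnd (ecode x)) = psnd (psnd (ecode y))) \<longleftrightarrow> (fst x = fst y \<and> fst (snd x) = fst (snd y) \<longrightarrow> snd (snd x) = snd (snd y))" for x y
    by (cases x; cases y) (auto simp: ecode_def int_encode_eq)
  have "det_c (Ecode L) \<noteq> 0 \<longleftrightarrow> (\<forall>x\<in>set L. \<forall>y\<in>set L. (pfst (ecode x) = pfst (ecode y) \<and> pfst (psnd (ecode x)) = pfst (psnd (ecode y)) \<longrightarrow>
      psnd (psnd (ecode x)) = psnd (psnd (ecode y))))"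
    unfolding det_c_def Ecode_def ball_c_correct by (simp only: if10 set_map ball_simps(9))
  also have "\<dots> \<longleftrightarrow> (\<forall>x\<in>set L. \<forall>y\<in>set L. (fst x = fst y \<and> fst (snd x) = fst (snd y) \<longrightarrow> snd (snd x) = snd (snd y)))"
    by (simp only: q)
  also have "\<dots> \<longleftrightarrow> edet L"
    unfolding edet_def
  proof (intro iffI allI impI)
    fix s a t t' assume H: "\<forall>x\<in>set L. \<forall>y\<in>set L. fst x = fst y \<and> fst (snd x) = fst (snd y) \<longrightarrow> snd (snd x) = snd (snd y)"
      and "(s, a, t) \<in> set L" "(s, a, t') \<in> set L"
    then show "t = t'" using H[rule_format, of "(s,a,t)" "(s,a,t')"] by simp
  next
    fix x y assume H: "\<forall>s a t t'. (s, a, t) \<in> set L \<longrightarrow> (s, a, t') \<in> set L \<longrightarrow> t = t'"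
    show "\<forall>x\<in>set L. \<forall>y\<in>set L. fst x = fst y \<and> fst (snd x) = fst (snd y) \<longrightarrow> snd (snd x) = snd (snd y)"
    proof (intro ballI impI)
      fix x y assume "x \<in> set L" "y \<in> set L" "fst x = fst y \<and> fst (snd x) = fst (snd y)"
      then show "snd (snd x) = snd (snd y)" using H[rule_format, of "fst x" "fst (snd x)" "snd (snd x)" "snd (snd y)"]
        by (cases x; cases y) auto
    qed
  qed
  finally show ?thesis .
qed

definition loops_c :: "nat \<Rightarrow> nat \<Rightarrow> nat" where
  "loops_c E G = ball_c (\<lambda>E g. follow_c E 1 g = 1) E G"

lemma comp_loops_c[intro]: "cpt k a \<Longrightarrow> cpt k b \<Longrightarrow> cpt k (\<lambda>xs. loops_c (a xs) (b xs))"
  unfolding loops_c_def by (intro comp_basic comp_ball_c comp_follow_c) simp_all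

lemma enc_words_def': "enc_words gs = list_encode (map enc_word gs)"
  by (simp add: enc_words_def)

lemma follow_c_1: "follow_c (Ecode L) (Suc 0) (enc_word w) = Suc 0 \<longleftrightarrow> follow L 0 w = Some 0"
  using follow_c_correct[of L 0 w] by (auto split: option.splits)

lemma follow_c_1': "follow_c (Ecode L) 1 (enc_word w) = 1 \<longleftrightarrow> follow L 0 w = Some 0"
  using follow_c_1 by simp

lemma loops_c_correct: "loops_c (Ecode L) (enc_words gs) \<noteq> 0 \<longleftrightarrow> (\<forall>g\<in>set gs. follow L 0 g = Some 0)"
  unfolding loops_c_def enc_words_def' by (simp add: follow_c_1)

definition tgt :: "int list \<Rightarrow> int list \<Rightarrow> nat \<Rightarrow> int list" where
  "tgt u w k = red (concat (replicate k w) @ rev (map uminus u))"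

definition target_c :: "nat \<Rightarrow> nat \<Rightarrow> nat \<Rightarrow> nat" where
  "target_c W U k = lred (lapp (lpow W k) (linv U))"

lemma comp_target_c[intro]: "cpt k a \<Longrightarrow> cpt k b \<Longrightarrow> cpt k c \<Longrightarrow> cpt k (\<lambda>xs. target_c (a xs) (b xs) (c xs))"
  unfolding target_c_def by (intro comp_lred comp_lapp comp_lpow comp_linv)

lemma target_c_correct: "target_c (enc_word w) (enc_word u) k = enc_word (tgt u w k)"
  by (simp add: target_c_def tgt_def)

definition NM_c :: "nat \<Rightarrow> nat \<Rightarrow> nat \<Rightarrow> nat \<Rightarrow> nat \<Rightarrow> bool" where
  "NM_c G U W k E \<longleftrightarrow> closed_c E \<noteq> 0 \<and> det_c E \<noteq> 0 \<and> loops_c E G \<noteq> 0 \<and> follow_c E 1 (target_c W U k) \<noteq> 1"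

definition NMm :: "int list list \<Rightarrow> edge list \<Rightarrow> int list \<Rightarrow> bool" where
  "NMm gs L g \<longleftrightarrow> eclosed L \<and> edet L \<and> (\<forall>h\<in>set gs. follow L 0 h = Some 0) \<and> follow L 0 g \<noteq> Some 0"

lemma NM_c_correct: "NM_c (enc_words gs) (enc_word u) (enc_word w) k E \<longleftrightarrow> NMm gs (Edec E) (tgt u w k)"
proof -
  have "NM_c (enc_words gs) (enc_word u) (enc_word w) k (Ecode (Edec E)) \<longleftrightarrow> NMm gs (Edec E) (tgt u w k)"
    unfolding NM_c_def NMm_def
    by (simp only: closed_c_correct det_c_correct loops_c_correct target_c_correct follow_c_1')
  then show ?thesis by simp
qed

lemma compP_NM_c[intro]: "cpt k a \<Longrightarrow> cpt k b \<Longrightarrow> cpt k c \<Longrightarrow> cpt k d \<Longrightarrow> cpt k e \<Longrightarrow>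
   compP k (\<lambda>xs. NM_c (a xs) (b xs) (c xs) (d xs) (e xs))"
  unfolding NM_c_def by (intro comp_basic comp_closed_c comp_det_c comp_loops_c comp_follow_c comp_target_c)

definition gsel :: "int list list \<Rightarrow> nat \<Rightarrow> int list" where
  "gsel gs e = (let h = (if pfst e < length gs then gs ! pfst e else []) in
     if psnd e = 0 then h else rev (map uminus h))"

definition gensel_c :: "nat \<Rightarrow> nat \<Rightarrow> nat" where
  "gensel_c G e = (if psnd e = 0 then lnth G (pfst e) else linv (lnth G (pfst e)))"

definition prodcert_c :: "nat \<Rightarrow> nat \<Rightarrow> nat" where
  "prodcert_c G c = lfold (\<lambda>G x acc. lapp acc (gensel_c G x)) G 0 c"

lemma comp_prodcert_c[intro]: "cpt k a \<Longrightarrow> cpt k b \<Longrightarrow> cpt k (\<lambda>xs. prodcert_c (a xs) (b xs))"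
  unfolding prodcert_c_def gensel_c_def by (intro comp_basic comp_lfold comp_lapp comp_lnth comp_linv) simp_all

lemma gensel_c_correct: "gensel_c (enc_words gs) e = enc_word (gsel gs e)"
proof -
  have "lnth (enc_words gs) i = enc_word (if i < length gs then gs ! i else [])" for i
    by (simp add: enc_words_def' lnth_correct)
  then show ?thesis by (simp add: gensel_c_def gsel_def Let_def)
qed

lemma prodcert_c_correct: "prodcert_c (enc_words gs) (list_encode es) = enc_word (concat (map (gsel gs) es))"
proof -
  have "foldl (\<lambda>acc x. lapp acc (gensel_c (enc_words gs) x)) (enc_word b) es = enc_word (b @ concat (map (gsel gs) es))" for b
    by (induction es arbitrary: b) (simp_all add: gensel_c_correct)
  from this[of "[]"] show ?thesis by (simp add: prodcert_c_def)
qed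

definition Mem_c :: "nat \<Rightarrow> nat \<Rightarrow> nat \<Rightarrow> nat \<Rightarrow> nat \<Rightarrow> bool" where
  "Mem_c G U W k c \<longleftrightarrow> lred (prodcert_c G c) = target_c W U k"

lemma compP_Mem_c[intro]: "cpt k a \<Longrightarrow> cpt k b \<Longrightarrow> cpt k c \<Longrightarrow> cpt k d \<Longrightarrow> cpt k e \<Longrightarrow>
   compP k (\<lambda>xs. Mem_c (a xs) (b xs) (c xs) (d xs) (e xs))"
  unfolding Mem_c_def by (intro comp_basic comp_lred comp_prodcert_c comp_target_c)

lemma Mem_c_correct: "Mem_c (enc_words gs) (enc_word u) (enc_word w) k c \<longleftrightarrow>
    red (concat (map (gsel gs) (list_decode c))) = tgt u w k"
  using prodcert_c_correct[of gs "list_decode c"]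
  by (simp add: Mem_c_def target_c_correct)

definition ballNM :: "nat \<Rightarrow> nat \<Rightarrow> nat" where
  "ballNM V N = nrec (\<lambda>V i acc. if acc \<noteq> 0 \<and> NM_c (pfst V) (pfst (psnd V)) (pfst (psnd (psnd V))) (Suc i)
       (lnth (psnd (psnd (psnd V))) (Suc i)) then 1 else 0) V 1 N"

lemma comp_ballNM[intro]: "cpt k a \<Longrightarrow> cpt k b \<Longrightarrow> cpt k (\<lambda>xs. ballNM (a xs) (b xs))"
  unfolding ballNM_def by (intro comp_basic compP_NM_c comp_lnth) simp_all

lemma ballNM_correct: "ballNM (pair G (pair U (pair W C))) N \<noteq> 0 \<longleftrightarrow> (\<forall>i<N. NM_c G U W (Suc i) (lnth C (Suc i)))"
proof -
  have "ballNM (pair G (pair U (pair W C))) N = (if \<forall>i<N. NM_c G U W (Suc i) (lnth C (Suc i)) then 1 else 0)"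
    by (induction N) (auto simp: ballNM_def less_Suc_eq)
  then show ?thesis by simp
qed

definition sumlen_c :: "nat \<Rightarrow> nat" where
  "sumlen_c G = lfold (\<lambda>e g acc. acc + llen g + 1) 0 0 G"

lemma comp_sumlen_c[intro]: "cpt k a \<Longrightarrow> cpt k (\<lambda>xs. sumlen_c (a xs))"
  unfolding sumlen_c_def by (intro comp_basic comp_lfold comp_llen) simp_all

lemma sumlen_c_correct: "sumlen_c (enc_words gs) = sum_list (map (\<lambda>g. length g + 1) gs)"
proof -
  have "foldl (\<lambda>acc g. acc + llen g + 1) b (map enc_word gs) = b + sum_list (map (\<lambda>g. length g + 1) gs)" for b
    by (induction gs arbitrary: b) (auto simp: enc_word_def)
  then show ?thesis by (simp add: sumlen_c_def enc_words_def')
qed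

definition bound_c :: "nat \<Rightarrow> nat \<Rightarrow> nat" where
  "bound_c G U = llen U + 2 * sumlen_c G + 1"

definition Bm :: "int list list \<Rightarrow> int list \<Rightarrow> nat" where
  "Bm gs u = length u + 2 * sum_list (map (\<lambda>g. length g + 1) gs) + 1"

lemma bound_c_correct: "bound_c (enc_words gs) (enc_word u) = Bm gs u"
  by (simp add: bound_c_def Bm_def sumlen_c_correct enc_word_def)

definition check_c :: "nat \<Rightarrow> nat \<Rightarrow> nat \<Rightarrow> nat \<Rightarrow> bool" where
  "check_c z G U W \<longleftrightarrow> (if pfst z = 0 then ballNM (pair G (pair U (pair W (psnd z)))) (bound_c G U) \<noteq> 0
     else Mem_c G U W (pfst z) (lnth (psnd z) 0) \<and> ballNM (pair G (pair U (pair W (psnd z)))) (pfst z - 1) \<noteq> 0)"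

lemma compP_check: "compP 4 (\<lambda>ys. check_c (ys!0) (ys!1) (ys!2) (ys!3))"
  unfolding check_c_def bound_c_def
  by (intro compP_ifb comp_basic compP_Mem_c comp_ballNM comp_lnth comp_llen comp_sumlen_c) simp_all

lemma check_c_correct: "check_c z (enc_words gs) (enc_word u) (enc_word w) \<longleftrightarrow>
  (if pfst z = 0 then (\<forall>k. 1 \<le> k \<and> k \<le> Bm gs u \<longrightarrow> NMm gs (Edec (lnth (psnd z) k)) (tgt u w k))
   else red (concat (map (gsel gs) (list_decode (lnth (psnd z) 0)))) = tgt u w (pfst z) \<and>
        (\<forall>k. 1 \<le> k \<and> k < pfst z \<longrightarrow> NMm gs (Edec (lnth (psnd z) k)) (tgt u w k)))"
proof -
  have A: "(\<forall>i<N. P (Suc i)) \<longleftrightarrow> (\<forall>k. 1 \<le> k \<and> k \<le> N \<longrightarrow> P k)" for N P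
  proof
    assume H: "\<forall>i<N. P (Suc i)"
    show "\<forall>k. 1 \<le> k \<and> k \<le> N \<longrightarrow> P k"
    proof (intro allI impI)
      fix k assume "1 \<le> k \<and> k \<le> N"
      then obtain i where "k = Suc i" "i < N" by (cases k) auto
      then show "P k" using H by simp
    qed
  next
    assume H: "\<forall>k. 1 \<le> k \<and> k \<le> N \<longrightarrow> P k"
    show "\<forall>i<N. P (Suc i)" using H by simp
  qed
  have B: "(\<forall>i<N - 1. P (Suc i)) \<longleftrightarrow> (\<forall>k. 1 \<le> k \<and> k < N \<longrightarrow> P k)" for N P
  proof
    assume H: "\<forall>i<N - 1. P (Suc i)"
    show "\<forall>k. 1 \<le> k \<and> k < N \<longrightarrow> P k"
    proof (intro allI impI)
      fix k assume "1 \<le> k \<and> k < N"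
      then obtain i where "k = Suc i" "i < N - 1" by (cases k) auto
      then show "P k" using H by simp
    qed
  next
    assume H: "\<forall>k. 1 \<le> k \<and> k < N \<longrightarrow> P k"
    show "\<forall>i<N - 1. P (Suc i)" using H by simp
  qed
  show ?thesis
    unfolding check_c_def ballNM_correct bound_c_correct NM_c_correct Mem_c_correct
      A[of "Bm gs u" "\<lambda>k. NMm gs (Edec (lnth (psnd z) k)) (tgt u w k)"]
      B[of "pfst z" "\<lambda>k. NMm gs (Edec (lnth (psnd z) k)) (tgt u w k)"] ..
qed



section \<open>Reduced words\<close>

fun rd :: "int list \<Rightarrow> bool" where
  "rd [] = True"
| "rd [a] = True"
| "rd (a # b # l) = (b \<noteq> - a \<and> rd (b # l))"

lemma reduced_rd: "reduced xs \<longleftrightarrow> rd xs"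
proof (induction xs rule: rd.induct)
  case (3 a b l)
  have "reduced (a # b # l) \<longleftrightarrow> b \<noteq> - a \<and> reduced (b # l)"
    unfolding reduced_def
  proof (intro iffI conjI allI impI)
    fix i assume H: "\<forall>i. Suc i < length (a # b # l) \<longrightarrow> (a # b # l) ! Suc i \<noteq> - (a # b # l) ! i"
      and "Suc i < length (b # l)"
    then show "(b # l) ! Suc i \<noteq> - (b # l) ! i" using H[rule_format, of "Suc i"] by simp
  next
    assume H: "\<forall>i. Suc i < length (a # b # l) \<longrightarrow> (a # b # l) ! Suc i \<noteq> - (a # b # l) ! i"
    then show "b \<noteq> - a" using H[rule_format, of 0] by simp
  next
    fix i assume H: "b \<noteq> - a \<and> (\<forall>i. Suc i < length (b # l) \<longrightarrow> (b # l) ! Suc i \<noteq> - (b # l) ! i)"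
      and "Suc i < length (a # b # l)"
    then show "(a # b # l) ! Suc i \<noteq> - (a # b # l) ! i" by (cases i) auto
  qed
  then show ?case using 3 by simp
qed (auto simp: reduced_def)

lemma rd_tl: "rd (a # l) \<Longrightarrow> rd l"
  by (cases l) auto

lemma rd_append: "rd (xs @ ys) \<longleftrightarrow> rd xs \<and> rd ys \<and> (xs \<noteq> [] \<longrightarrow> ys \<noteq> [] \<longrightarrow> hd ys \<noteq> - last xs)"
proof (induction xs rule: rd.induct)
  case 1 then show ?case by simp
next
  case (2 a) then show ?case by (cases ys) auto
next
  case (3 a b l) then show ?case by auto
qed

lemma rd_prefix: "rd (xs @ ys) \<Longrightarrow> rd xs" and rd_suffix: "rd (xs @ ys) \<Longrightarrow> rd ys"
  by (auto simp: rd_append)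

declare red.simps(2)[simp del]

lemma rd_redstep: "rd r \<Longrightarrow> rd (redstep a r)"
  by (cases r) (auto dest: rd_tl)

lemma rd_red: "rd (red xs)"
  by (induction xs) (auto simp: red_Cons rd_redstep)

lemma red_rd: "rd xs \<Longrightarrow> red xs = xs"
proof (induction xs rule: rd.induct)
  case (3 a b l)
  then show ?case by (simp add: red_Cons[of a] del: redstep.simps) simp
qed (auto simp: red_Cons)

lemma red_red[simp]: "red (red xs) = red xs"
  by (rule red_rd[OF rd_red])

lemma set_redstep: "set (redstep a r) \<subseteq> insert a (set r)"
  by (cases r) auto

lemma set_red: "set (red xs) \<subseteq> set xs"
  by (induction xs) (use set_redstep in \<open>fastforce simp: red_Cons\<close>)+

lemma redstep_inv: "rd r \<Longrightarrow> redstep a (redstep (- a) r) = r"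
proof (cases r)
  case (Cons c ys)
  assume r: "rd r"
  show ?thesis
  proof (cases "c = a")
    case True
    then show ?thesis using r Cons by (cases ys) auto
  next
    case False
    then show ?thesis using Cons by auto
  qed
qed simp

lemma red_cancel2: "red (a # - a # zs) = red zs"
  by (simp add: red_Cons redstep_inv[OF rd_red] del: redstep.simps)

lemma red_append_right: "red (xs @ red ys) = red (xs @ ys)"
  by (induction xs) (auto simp: red_Cons)

lemma red_append_left: "red (red xs @ ys) = red (xs @ ys)"
proof (induction xs)
  case (Cons a xs)
  show ?case
  proof (cases "red xs")
    case Nil
    then have "red (xs @ ys) = red ys" using Cons.IH by simp
    then show ?thesis using Nil by (simp add: red_Cons)
  next
    case (Cons b zs)
    show ?thesis
    proof (cases "b = - a")
      case True
      have "red ((a # xs) @ ys) = redstep a (red (red xs @ ys))" using Cons.IH by (simp add: red_Cons)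
      also have "\<dots> = redstep a (red (b # zs @ ys))" using Cons by simp
      also have "\<dots> = red (a # b # zs @ ys)" by (simp add: red_Cons)
      also have "\<dots> = red (zs @ ys)" using True red_cancel2[of a "zs @ ys"] by simp
      finally show ?thesis using Cons True by (simp add: red_Cons)
    next
      case False
      have "red ((a # xs) @ ys) = redstep a (red (red xs @ ys))" using Cons.IH by (simp add: red_Cons)
      then show ?thesis using Cons False by (simp add: red_Cons)
    qed
  qed
qed simp

lemma red_cancel: "red (xs @ a # - a # zs) = red (xs @ zs)"
  by (metis red_append_right red_cancel2)

definition winv :: "int list \<Rightarrow> int list" where "winv x = rev (map uminus x)"

lemma winv_Cons: "winv (a # x) = winv x @ [- a]" by (simp add: winv_def)
lemma winv_append: "winv (x @ y) = winv y @ winv x" by (simp add: winv_def)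
lemma winv_winv[simp]: "winv (winv x) = x" by (simp add: winv_def rev_map)
lemma length_winv[simp]: "length (winv x) = length x" by (simp add: winv_def)
lemma winv_Nil[simp]: "winv [] = []" by (simp add: winv_def)

lemma red_winv_self: "red (winv x @ x) = []"
proof (induction x)
  case (Cons a x)
  have "red (winv (a # x) @ a # x) = red (winv x @ - a # - (- a) # x)" by (simp add: winv_Cons)
  also have "\<dots> = red (winv x @ x)" by (rule red_cancel)
  finally show ?case using Cons by simp
qed simp

lemma red_self_winv: "red (x @ winv x) = []"
  using red_winv_self[of "winv x"] by simp

lemma rd_winv: "rd x \<Longrightarrow> rd (winv x)"
proof (induction x rule: rd.induct)
  case (3 a b l)
  then have "rd (winv (b # l))" by simp
  moreover have "last (winv (b # l)) = - b" by (simp add: winv_def)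
  ultimately show ?case using 3 by (simp add: winv_Cons[of a] rd_append del: rd.simps) (auto simp: winv_def)
qed (auto simp: winv_def)

abbreviation FG :: "nat \<Rightarrow> int list monoid" where "FG n \<equiv> free_group n"

definition alph :: "nat \<Rightarrow> int list \<Rightarrow> bool" where
  "alph n xs \<longleftrightarrow> (\<forall>a\<in>set xs. a \<noteq> 0 \<and> \<bar>a\<bar> \<le> int n)"

lemma carrier_FG: "x \<in> carrier (FG n) \<longleftrightarrow> rd x \<and> alph n x"
  by (simp add: free_group_def reduced_rd alph_def)

lemma mult_FG[simp]: "x \<otimes>\<^bsub>FG n\<^esub> y = red (x @ y)"
  by (simp add: free_group_def)

lemma one_FG[simp]: "\<one>\<^bsub>FG n\<^esub> = []"
  by (simp add: free_group_def)

lemma alph_append[simp]: "alph n (x @ y) \<longleftrightarrow> alph n x \<and> alph n y"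
  by (auto simp: alph_def)

lemma alph_red: "alph n x \<Longrightarrow> alph n (red x)"
  using set_red[of x] by (auto simp: alph_def)

lemma alph_winv: "alph n x \<Longrightarrow> alph n (winv x)"
  by (auto simp: alph_def winv_def)

lemma group_FG: "group (FG n)"
proof (rule groupI)
  fix x y z assume x: "x \<in> carrier (FG n)" and y: "y \<in> carrier (FG n)" and z: "z \<in> carrier (FG n)"
  show "x \<otimes>\<^bsub>FG n\<^esub> y \<in> carrier (FG n)" using x y by (simp add: carrier_FG rd_red alph_red)
  show "x \<otimes>\<^bsub>FG n\<^esub> y \<otimes>\<^bsub>FG n\<^esub> z = x \<otimes>\<^bsub>FG n\<^esub> (y \<otimes>\<^bsub>FG n\<^esub> z)"
    by (simp add: red_append_left red_append_right)
next
  show "\<one>\<^bsub>FG n\<^esub> \<in> carrier (FG n)" by (simp add: carrier_FG alph_def)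
next
  fix x assume x: "x \<in> carrier (FG n)"
  then show "\<one>\<^bsub>FG n\<^esub> \<otimes>\<^bsub>FG n\<^esub> x = x" by (simp add: carrier_FG red_rd)
  show "\<exists>y\<in>carrier (FG n). y \<otimes>\<^bsub>FG n\<^esub> x = \<one>\<^bsub>FG n\<^esub>"
    using x by (intro bexI[of _ "winv x"]) (auto simp: carrier_FG red_winv_self rd_winv alph_winv)
qed

interpretation FGg: group "FG n" by (rule group_FG)

lemma inv_FG: "x \<in> carrier (FG n) \<Longrightarrow> inv\<^bsub>FG n\<^esub> x = winv x"
  by (rule FGg.inv_equality) (auto simp: carrier_FG red_winv_self rd_winv alph_winv)

lemma concat_rep2': "concat (replicate k x) @ x = concat (replicate (Suc k) x)"
  by (induction k) auto

lemma pow_FG: "x \<in> carrier (FG n) \<Longrightarrow> x [^]\<^bsub>FG n\<^esub> (k::nat) = red (concat (replicate k x))"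
proof (induction k)
  case 0 then show ?case by simp
next
  case (Suc k)
  have "x [^]\<^bsub>FG n\<^esub> Suc k = red (red (concat (replicate k x)) @ x)" using Suc by simp
  also have "\<dots> = red (concat (replicate (Suc k) x))" by (simp add: red_append_left concat_rep2')
  finally show ?case .
qed

lemma concat_rep2: "concat (replicate k x) @ x = concat (replicate (Suc k) x)"
  by (induction k) auto

lemma tgt_FG: "u \<in> carrier (FG n) \<Longrightarrow> w \<in> carrier (FG n) \<Longrightarrow>
   tgt u w k = w [^]\<^bsub>FG n\<^esub> k \<otimes>\<^bsub>FG n\<^esub> inv\<^bsub>FG n\<^esub> u"
  by (simp add: tgt_def pow_FG inv_FG red_append_left winv_def)

section \<open>Generated subgroup as products\<close>

lemma gsel_carrier: "set gs \<subseteq> carrier (FG n) \<Longrightarrow> gsel gs e \<in> carrier (FG n)"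
proof -
  assume gs: "set gs \<subseteq> carrier (FG n)"
  have h: "(if pfst e < length gs then gs ! pfst e else []) \<in> carrier (FG n)"
    using gs FGg.one_closed by auto
  then have "winv (if pfst e < length gs then gs ! pfst e else []) \<in> carrier (FG n)"
    by (auto simp: carrier_FG rd_winv alph_winv)
  then show ?thesis using h by (simp add: gsel_def Let_def winv_def)
qed

lemma gsel_gen: "set gs \<subseteq> carrier (FG n) \<Longrightarrow> gsel gs e \<in> generate (FG n) (set gs)"
proof -
  assume gs: "set gs \<subseteq> carrier (FG n)"
  show ?thesis
  proof (cases "pfst e < length gs")
    case True
    then have m: "gs ! pfst e \<in> set gs" by simp
    show ?thesis
    proof (cases "psnd e = 0")
      case True then show ?thesis using m by (simp add: gsel_def Let_def \<open>pfst e < length gs\<close> generate.incl)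
    next
      case False
      have "inv\<^bsub>FG n\<^esub> (gs ! pfst e) \<in> generate (FG n) (set gs)" using m by (rule generate.inv)
      then show ?thesis using False m gs by (simp add: gsel_def Let_def \<open>pfst e < length gs\<close> inv_FG subsetD winv_def)
    qed
  next
    case False
    then have "gsel gs e = \<one>\<^bsub>FG n\<^esub>" by (simp add: gsel_def Let_def winv_def)
    then show ?thesis using generate.one[of "FG n" "set gs"] by simp
  qed
qed

lemma prod_gen: "set gs \<subseteq> carrier (FG n) \<Longrightarrow> red (concat (map (gsel gs) es)) \<in> generate (FG n) (set gs)"
proof (induction es)
  case Nil then show ?case using generate.one[of "FG n"] by simp
next
  case (Cons e es)
  have "gsel gs e \<otimes>\<^bsub>FG n\<^esub> red (concat (map (gsel gs) es)) \<in> generate (FG n) (set gs)"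
    by (rule generate.eng[OF gsel_gen[OF Cons.prems] Cons.IH[OF Cons.prems]])
  then show ?case by (simp add: red_append_right)
qed

lemma gen_prod:
  assumes gs: "set gs \<subseteq> carrier (FG n)" and h: "h \<in> generate (FG n) (set gs)"
  shows "\<exists>es. h = red (concat (map (gsel gs) es))"
  using h
proof induction
  case one then show ?case by (intro exI[of _ "[]"]) simp
next
  case (incl h)
  then obtain i where i: "i < length gs" "h = gs ! i" by (auto simp: in_set_conv_nth)
  have "gsel gs (pair i 0) = h" using i by (simp add: gsel_def)
  moreover have "red h = h" using incl gs by (auto simp: carrier_FG red_rd)
  ultimately show ?case by (intro exI[of _ "[pair i 0]"]) simp
next
  case (inv h)
  then obtain i where i: "i < length gs" "h = gs ! i" by (auto simp: in_set_conv_nth)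
  have hc: "h \<in> carrier (FG n)" using inv gs by auto
  have "gsel gs (pair i 1) = winv h" using i by (simp add: gsel_def winv_def)
  moreover have "red (winv h) = winv h" using hc by (auto simp: carrier_FG red_rd rd_winv)
  ultimately show ?case using hc by (intro exI[of _ "[pair i 1]"]) (simp add: inv_FG)
next
  case (eng h1 h2)
  then obtain es1 es2 where "h1 = red (concat (map (gsel gs) es1))" "h2 = red (concat (map (gsel gs) es2))" by blast
  then show ?case
    by (intro exI[of _ "es1 @ es2"]) (simp add: red_append_left red_append_right)
qed

section \<open>Automata: soundness\<close>

lemma follow_append: "follow L s (x @ y) = (case follow L s x of None \<Rightarrow> None | Some t \<Rightarrow> follow L t y)"
  by (induction x arbitrary: s) (auto split: option.splits)

lemma lookup_in: "lookup L s a = Some t \<Longrightarrow> (s, a, t) \<in> set L"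
  by (induction L s a rule: lookup.induct) (auto split: if_splits)

lemma lookup_det: "edet L \<Longrightarrow> (s, a, t) \<in> set L \<Longrightarrow> lookup L s a = Some t"
proof (induction L s a rule: lookup.induct)
  case (2 s' a' t' L s a)
  then show ?case by (auto simp: edet_def)
qed simp

lemma lookup_back: "eclosed L \<Longrightarrow> edet L \<Longrightarrow> lookup L s a = Some t \<Longrightarrow> lookup L t (- a) = Some s"
  by (meson eclosed_def lookup_det lookup_in)

lemma follow_red:
  assumes cl: "eclosed L" and dt: "edet L"
  shows "follow L s xs = Some t \<Longrightarrow> follow L s (red xs) = Some t"
proof (induction xs arbitrary: s)
  case (Cons a xs)
  obtain s1 where s1: "lookup L s a = Some s1" "follow L s1 xs = Some t"
    using Cons.prems by (auto split: option.splits)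
  have IH: "follow L s1 (red xs) = Some t" using Cons.IH[OF s1(2)] .
  show ?case
  proof (cases "red xs")
    case Nil then show ?thesis using s1 IH by (simp add: red_Cons)
  next
    case (Cons b ys)
    show ?thesis
    proof (cases "b = - a")
      case True
      have bk: "lookup L s1 (- a) = Some s" by (rule lookup_back[OF cl dt s1(1)])
      have "follow L s ys = Some t" using IH Cons True bk by simp
      then show ?thesis using Cons True by (simp add: red_Cons)
    next
      case False
      then show ?thesis using Cons s1 IH by (simp add: red_Cons)
    qed
  qed
qed simp

lemma follow_winv:
  assumes cl: "eclosed L" and dt: "edet L"
  shows "follow L s x = Some t \<Longrightarrow> follow L t (winv x) = Some s"
proof (induction x arbitrary: s)
  case (Cons a x)
  obtain s1 where s1: "lookup L s a = Some s1" "follow L s1 x = Some t"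
    using Cons.prems by (auto split: option.splits)
  have "follow L t (winv x) = Some s1" by (rule Cons.IH[OF s1(2)])
  then show ?case using lookup_back[OF cl dt s1(1)] by (simp add: winv_Cons follow_append)
qed simp

lemma NMm_sound:
  assumes gs: "set gs \<subseteq> carrier (FG n)" and nm: "NMm gs L g"
  shows "g \<notin> generate (FG n) (set gs)"
proof
  have cl: "eclosed L" and dt: "edet L" and lp: "\<forall>h\<in>set gs. follow L 0 h = Some 0"
    using nm by (auto simp: NMm_def)
  assume "g \<in> generate (FG n) (set gs)"
  then have "follow L 0 g = Some 0"
  proof induction
    case one then show ?case by simp
  next
    case (incl h) then show ?case using lp by simp
  next
    case (inv h)
    then have "inv\<^bsub>FG n\<^esub> h = winv h" using gs by (auto simp: inv_FG)
    then show ?case using follow_winv[OF cl dt, of 0 h 0] lp inv by simp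
  next
    case (eng h1 h2)
    then have "follow L 0 (h1 @ h2) = Some 0" by (simp add: follow_append)
    then show ?case using follow_red[OF cl dt] by simp
  qed
  then show False using nm by (simp add: NMm_def)
qed

section \<open>Automata: completeness via restricted Schreier graphs\<close>

abbreviation rc :: "nat \<Rightarrow> int list set \<Rightarrow> int list \<Rightarrow> int list set" where
  "rc n H p \<equiv> H #>\<^bsub>FG n\<^esub> p"

definition letters :: "nat \<Rightarrow> int list" where
  "letters n = filter (\<lambda>a. a \<noteq> 0) [- int n..int n]"

lemma letters_iff: "a \<in> set (letters n) \<longleftrightarrow> a \<noteq> 0 \<and> \<bar>a\<bar> \<le> int n"
  by (auto simp: letters_def)

lemma letter_carrier: "a \<in> set (letters n) \<Longrightarrow> [a] \<in> carrier (FG n)"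
  by (auto simp: carrier_FG alph_def letters_iff)

definition cnum :: "nat \<Rightarrow> int list set \<Rightarrow> int list list \<Rightarrow> int list set \<Rightarrow> nat" where
  "cnum n H PL Z = (LEAST i. i < length PL \<and> rc n H (PL ! i) = Z)"

definition SL :: "nat \<Rightarrow> int list set \<Rightarrow> int list list \<Rightarrow> edge list" where
  "SL n H PL = [(cnum n H PL (rc n H p), a, cnum n H PL (rc n H (red (p @ [a])))).
     p \<leftarrow> PL, a \<leftarrow> letters n, \<exists>q\<in>set PL. rc n H q = rc n H (red (p @ [a]))]"

locale schreier =
  fixes n :: nat and H :: "int list set" and PL :: "int list list"
  assumes sub: "subgroup H (FG n)"
    and PL_ne: "PL \<noteq> []" and PL0: "PL ! 0 = []" and PLc: "set PL \<subseteq> carrier (FG n)"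
begin

abbreviation inS :: "int list set \<Rightarrow> bool" where
  "inS Z \<equiv> \<exists>q\<in>set PL. rc n H q = Z"

abbreviation "cn \<equiv> cnum n H PL"
abbreviation "L \<equiv> SL n H PL"

lemma Hc: "H \<subseteq> carrier (FG n)" using sub by (rule subgroup.subset)

lemma rc_step: "p \<in> carrier (FG n) \<Longrightarrow> x \<in> carrier (FG n) \<Longrightarrow> rc n H (red (p @ x)) = rc n H p #>\<^bsub>FG n\<^esub> x"
  using FGg.coset_mult_assoc[OF Hc] by simp

lemma cn_prop: "inS Z \<Longrightarrow> cn Z < length PL \<and> rc n H (PL ! cn Z) = Z"
proof -
  assume "inS Z"
  then obtain i where "i < length PL \<and> rc n H (PL ! i) = Z" by (auto simp: in_set_conv_nth)
  from LeastI[where P="\<lambda>i. i < length PL \<and> rc n H (PL ! i) = Z", OF this]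
  show ?thesis unfolding cnum_def .
qed

lemma cn_inj: "inS Z \<Longrightarrow> inS Y \<Longrightarrow> cn Z = cn Y \<Longrightarrow> Z = Y"
  by (metis cn_prop)

lemma cn_H: "cn H = 0"
proof -
  have "rc n H (PL ! 0) = H" using PL0 FGg.coset_mult_one[OF Hc] by simp
  then show ?thesis unfolding cnum_def using PL_ne by (intro Least_equality) auto
qed

lemma inL: "(s, a, t) \<in> set L \<longleftrightarrow> (\<exists>p\<in>set PL. a \<in> set (letters n) \<and> inS (rc n H (red (p @ [a]))) \<and>
    s = cn (rc n H p) \<and> t = cn (rc n H (red (p @ [a]))))"
  unfolding SL_def by auto

lemma red_carrier: "p \<in> carrier (FG n) \<Longrightarrow> a \<in> set (letters n) \<Longrightarrow> red (p @ [a]) \<in> carrier (FG n)"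
  using FGg.m_closed[OF _ letter_carrier] by simp

lemma L_det: "edet L"
  unfolding edet_def
proof (intro allI impI)
  fix s a t t' assume "(s, a, t) \<in> set L" "(s, a, t') \<in> set L"
  then obtain p p' where p: "p \<in> set PL" "a \<in> set (letters n)" "s = cn (rc n H p)" "t = cn (rc n H (red (p @ [a])))"
    and p': "p' \<in> set PL" "s = cn (rc n H p')" "t' = cn (rc n H (red (p' @ [a])))"
    by (auto simp: inL)
  have "rc n H p = rc n H p'" using cn_inj p p' by blast
  then show "t = t'" using p p' PLc rc_step letter_carrier by (metis subsetD)
qed

lemma L_closed: "eclosed L"
  unfolding eclosed_def
proof (intro allI impI)
  fix s a t assume "(s, a, t) \<in> set L"
  then obtain p q where p: "p \<in> set PL" "a \<in> set (letters n)" "s = cn (rc n H p)" "t = cn (rc n H (red (p @ [a])))"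
    and q: "q \<in> set PL" "rc n H q = rc n H (red (p @ [a]))"
    by (auto simp: inL)
  have pc: "p \<in> carrier (FG n)" and qc: "q \<in> carrier (FG n)" using p q PLc by auto
  have ma: "- a \<in> set (letters n)" using p by (auto simp: letters_iff)
  have "rc n H (red (q @ [- a])) = rc n H q #>\<^bsub>FG n\<^esub> [- a]" by (rule rc_step[OF qc letter_carrier[OF ma]])
  also have "\<dots> = rc n H (red (p @ [a])) #>\<^bsub>FG n\<^esub> [- a]" using q by simp
  also have "\<dots> = rc n H (red (red (p @ [a]) @ [- a]))" by (rule rc_step[symmetric, OF red_carrier[OF pc p(2)] letter_carrier[OF ma]])
  also have "red (red (p @ [a]) @ [- a]) = p"
    using red_cancel[of p a "[]"] pc by (simp add: red_append_left carrier_FG red_rd)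
  finally have e: "rc n H (red (q @ [- a])) = rc n H p" .
  show "(t, - a, s) \<in> set L"
    unfolding inL using q p ma e by (intro bexI[of _ q]) auto
qed

lemma follow_complete:
  "p \<in> carrier (FG n) \<Longrightarrow> inS (rc n H p) \<Longrightarrow> alph n x \<Longrightarrow>
   (\<forall>j\<le>length x. inS (rc n H (red (p @ take j x)))) \<Longrightarrow>
   follow L (cn (rc n H p)) x = Some (cn (rc n H (red (p @ x))))"
proof (induction x arbitrary: p)
  case Nil
  then show ?case using FGg.coset_mult_one by (simp add: carrier_FG red_rd)
next
  case (Cons a x)
  have a: "a \<in> set (letters n)" using Cons.prems(3) by (auto simp: alph_def letters_iff)
  obtain q where q: "q \<in> set PL" "rc n H q = rc n H p" using Cons.prems(2) by auto
  have qc: "q \<in> carrier (FG n)" using q PLc by auto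
  have e1: "rc n H (red (q @ [a])) = rc n H (red (p @ [a]))"
    using rc_step[OF qc letter_carrier[OF a]] rc_step[OF Cons.prems(1) letter_carrier[OF a]] q by simp
  have in1: "inS (rc n H (red (p @ [a])))" using Cons.prems(4)[rule_format, of 1] by simp
  have "(cn (rc n H p), a, cn (rc n H (red (p @ [a])))) \<in> set L"
    unfolding inL using q a e1 in1 by (intro bexI[of _ q]) auto
  then have lk: "lookup L (cn (rc n H p)) a = Some (cn (rc n H (red (p @ [a]))))"
    by (rule lookup_det[OF L_det])
  have IH: "follow L (cn (rc n H (red (p @ [a])))) x = Some (cn (rc n H (red (red (p @ [a]) @ x))))"
  proof (rule Cons.IH)
    show "red (p @ [a]) \<in> carrier (FG n)" by (rule red_carrier[OF Cons.prems(1) a])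
    show "inS (rc n H (red (p @ [a])))" by (rule in1)
    show "alph n x" using Cons.prems(3) by (auto simp: alph_def)
    show "\<forall>j\<le>length x. inS (rc n H (red (red (p @ [a]) @ take j x)))"
    proof (intro allI impI)
      fix j assume "j \<le> length x"
      then have "inS (rc n H (red (p @ take (Suc j) (a # x))))" using Cons.prems(4)[rule_format, of "Suc j"] by simp
      then show "inS (rc n H (red (red (p @ [a]) @ take j x)))" by (simp add: red_append_left)
    qed
  qed
  then show ?case using lk by (simp add: red_append_left)
qed

lemma follow_sound:
  "p \<in> carrier (FG n) \<Longrightarrow> inS (rc n H p) \<Longrightarrow> follow L (cn (rc n H p)) x = Some t \<Longrightarrow>
   inS (rc n H (red (p @ x))) \<and> t = cn (rc n H (red (p @ x)))"
proof (induction x arbitrary: p)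
  case Nil
  then show ?case using FGg.coset_mult_one by (simp add: carrier_FG red_rd)
next
  case (Cons a x)
  obtain s1 where s1: "lookup L (cn (rc n H p)) a = Some s1" "follow L s1 x = Some t"
    using Cons.prems(3) by (auto split: option.splits)
  from lookup_in[OF s1(1)] obtain q where q: "q \<in> set PL" "a \<in> set (letters n)"
    "inS (rc n H (red (q @ [a])))" "cn (rc n H p) = cn (rc n H q)" "s1 = cn (rc n H (red (q @ [a])))"
    unfolding inL by blast
  have qc: "q \<in> carrier (FG n)" using q PLc by auto
  have "rc n H q = rc n H p" using cn_inj q Cons.prems(2) by metis
  then have e1: "rc n H (red (q @ [a])) = rc n H (red (p @ [a]))"
    using rc_step[OF qc letter_carrier[OF q(2)]] rc_step[OF Cons.prems(1) letter_carrier[OF q(2)]] by simp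
  have "inS (rc n H (red (red (p @ [a]) @ x))) \<and> t = cn (rc n H (red (red (p @ [a]) @ x)))"
    by (rule Cons.IH[OF red_carrier[OF Cons.prems(1) q(2)]]) (use q e1 s1 in auto)
  then show ?case by (simp add: red_append_left)
qed

end

definition PLgs :: "int list list \<Rightarrow> int list list" where
  "PLgs gs = [] # concat (map (\<lambda>h. map (\<lambda>i. take i h) [0..<Suc (length h)]) (gs @ map winv gs))"

lemma PLgs_mem: "h \<in> set gs \<union> winv ` set gs \<Longrightarrow> j \<le> length h \<Longrightarrow> take j h \<in> set (PLgs gs)"
proof -
  assume h: "h \<in> set gs \<union> winv ` set gs" and j: "j \<le> length h"
  define f where "f = (\<lambda>h::int list. map (\<lambda>i. take i h) [0..<Suc (length h)])"
  have tk: "take j h \<in> set (f h)" using j by (auto simp: f_def)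
  have fh: "f h \<in> set (map f (gs @ map winv gs))" using h by auto
  have "take j h \<in> \<Union> (set ` set (map f (gs @ map winv gs)))"
    by (rule UnionI[OF imageI[where f=set, OF fh] tk])
  then show ?thesis unfolding PLgs_def f_def[symmetric] by simp
qed

lemma take_carrier: "h \<in> carrier (FG n) \<Longrightarrow> take i h \<in> carrier (FG n)"
  by (metis append_take_drop_id carrier_FG rd_prefix alph_append)

lemma PLgs_carrier: "set gs \<subseteq> carrier (FG n) \<Longrightarrow> set (PLgs gs) \<subseteq> carrier (FG n)"
proof -
  assume gs: "set gs \<subseteq> carrier (FG n)"
  have "winv h \<in> carrier (FG n)" if "h \<in> set gs" for h
    using that gs by (auto simp: carrier_FG rd_winv alph_winv)
  then show ?thesis using gs FGg.one_closed by (auto simp: PLgs_def intro!: take_carrier)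
qed

lemma NMm_complete:
  assumes gs: "set gs \<subseteq> carrier (FG n)" and g: "g \<in> carrier (FG n)"
    and notin: "g \<notin> generate (FG n) (set gs)"
  shows "\<exists>L. NMm gs L g"
proof -
  let ?H = "generate (FG n) (set gs)"
  let ?PL = "PLgs gs"
  interpret S: schreier n ?H ?PL
    by (rule schreier.intro[OF FGg.generate_is_subgroup[OF gs] _ _ PLgs_carrier[OF gs]]) (simp_all add: PLgs_def)
  have Hc: "?H \<subseteq> carrier (FG n)" by (rule S.Hc)
  have H1: "rc n ?H [] = ?H" using FGg.coset_mult_one[OF Hc] by simp
  have inH: "S.inS ?H" using H1 by (intro bexI[of _ "[]"]) (auto simp: PLgs_def)
  have loops: "follow (SL n ?H ?PL) 0 h = Some 0" if h: "h \<in> set gs" for h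
  proof -
    have hc: "h \<in> carrier (FG n)" using h gs by auto
    have "follow (SL n ?H ?PL) (cnum n ?H ?PL (rc n ?H [])) h = Some (cnum n ?H ?PL (rc n ?H (red ([] @ h))))"
    proof (rule S.follow_complete)
      show "[] \<in> carrier (FG n)" using FGg.one_closed by simp
      show "S.inS (rc n ?H [])" using inH H1 by simp
      show "alph n h" using hc by (simp add: carrier_FG)
      show "\<forall>j\<le>length h. S.inS (rc n ?H (red ([] @ take j h)))"
      proof (intro allI impI)
        fix j assume "j \<le> length h"
        have "red (take j h) = take j h" using take_carrier[OF hc] by (simp add: carrier_FG red_rd)
        moreover have "take j h \<in> set ?PL" using h \<open>j \<le> length h\<close> by (intro PLgs_mem) auto
        ultimately show "S.inS (rc n ?H (red ([] @ take j h)))" by auto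
      qed
    qed
    moreover have "rc n ?H (red h) = ?H"
      using hc FGg.coset_join2[OF _ FGg.generate_is_subgroup[OF gs] generate.incl[OF h]]
      by (simp add: carrier_FG red_rd)
    ultimately show ?thesis using H1 S.cn_H by simp
  qed
  have tg: "follow (SL n ?H ?PL) 0 g \<noteq> Some 0"
  proof
    assume "follow (SL n ?H ?PL) 0 g = Some 0"
    then have "follow (SL n ?H ?PL) (cnum n ?H ?PL (rc n ?H [])) g = Some 0" using H1 S.cn_H by simp
    from S.follow_sound[OF _ _ this] have "S.inS (rc n ?H g)" "0 = cnum n ?H ?PL (rc n ?H g)"
      using FGg.one_closed inH H1 g by (auto simp: carrier_FG red_rd)
    then have "rc n ?H g = ?H" using S.cn_inj[of "rc n ?H g" ?H] inH S.cn_H by simp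
    then have "g \<in> ?H" using FGg.rcos_self[OF g FGg.generate_is_subgroup[OF gs]] by simp
    then show False using notin by simp
  qed
  show ?thesis
    using S.L_closed S.L_det loops tg by (intro exI[of _ "SL n ?H ?PL"]) (auto simp: NMm_def)
qed

lemma red_cancel_word: "red (xs @ c @ winv c @ ys) = red (xs @ ys)"
proof (induction c arbitrary: xs ys)
  case (Cons a c)
  have "red (xs @ (a # c) @ winv (a # c) @ ys) = red ((xs @ [a]) @ c @ winv c @ ([- a] @ ys))"
    by (simp add: winv_Cons)
  also have "\<dots> = red (xs @ a # - a # ys)" using Cons.IH[of "xs @ [a]" "[- a] @ ys"] by simp
  also have "\<dots> = red (xs @ ys)" by (rule red_cancel)
  finally show ?case .
qed simp

lemma cancel_struct: "rd h1 \<Longrightarrow> rd h2 \<Longrightarrow> \<exists>x c y. h1 = x @ c \<and> h2 = winv c @ y \<and> red (h1 @ h2) = x @ y \<and> rd (x @ y)"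
proof (induction h1 arbitrary: h2 rule: rev_induct)
  case Nil
  then show ?case by (intro exI[of _ "[]"] exI[of _ "[]"] exI[of _ h2]) (simp add: red_rd)
next
  case (snoc a h1)
  show ?case
  proof (cases h2)
    case Nil
    then show ?thesis using snoc.prems
      by (intro exI[of _ "h1 @ [a]"] exI[of _ "[]"] exI[of _ "[]"]) (simp add: red_rd)
  next
    case (Cons b h2')
    show ?thesis
    proof (cases "b = - a")
      case True
      have r1: "rd h1" using snoc.prems(1) by (rule rd_prefix)
      have r2: "rd h2'" using snoc.prems(2) Cons by (auto intro: rd_tl)
      obtain x c y where xcy: "h1 = x @ c" "h2' = winv c @ y" "red (h1 @ h2') = x @ y" "rd (x @ y)"
        using snoc.IH[OF r1 r2] by blast
      have "red ((h1 @ [a]) @ h2) = red (h1 @ a # - a # h2')" using Cons True by simp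
      also have "\<dots> = x @ y" using xcy red_cancel[of "x @ c" a "winv c @ y"] by simp
      finally show ?thesis using xcy Cons True
        by (intro exI[of _ x] exI[of _ "c @ [a]"] exI[of _ y]) (simp add: winv_append winv_def)
    next
      case False
      have "rd ((h1 @ [a]) @ h2)" using snoc.prems Cons False by (simp add: rd_append)
      then show ?thesis
        by (intro exI[of _ "h1 @ [a]"] exI[of _ "[]"] exI[of _ h2]) (simp add: red_rd)
    qed
  qed
qed

lemma gen_carrier: "set gs \<subseteq> carrier (FG n) \<Longrightarrow> h \<in> generate (FG n) (set gs) \<Longrightarrow> h \<in> carrier (FG n)"
  by (rule subgroup.mem_carrier[OF FGg.generate_is_subgroup])

lemma prefix_coset:
  assumes gs: "set gs \<subseteq> carrier (FG n)" and h: "h \<in> generate (FG n) (set gs)"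
  shows "\<forall>j\<le>length h. \<exists>q\<in>set (PLgs gs). rc n (generate (FG n) (set gs)) (take j h) = rc n (generate (FG n) (set gs)) q"
  using h
proof induction
  case one
  then show ?case by (auto simp: PLgs_def)
next
  case (incl h)
  then show ?case using PLgs_mem[of h gs] by blast
next
  case (inv h)
  then have "inv\<^bsub>FG n\<^esub> h = winv h" using gs by (auto simp: inv_FG)
  then show ?case using PLgs_mem[of "winv h" gs] inv by auto
next
  case (eng h1 h2)
  let ?H = "generate (FG n) (set gs)"
  have sub: "subgroup ?H (FG n)" by (rule FGg.generate_is_subgroup[OF gs])
  have Hc: "?H \<subseteq> carrier (FG n)" using sub by (rule subgroup.subset)
  have c1: "h1 \<in> carrier (FG n)" and c2: "h2 \<in> carrier (FG n)" using eng gen_carrier[OF gs] by auto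
  obtain x c y where xcy: "h1 = x @ c" "h2 = winv c @ y" "red (h1 @ h2) = x @ y" "rd (x @ y)"
    using cancel_struct[of h1 h2] c1 c2 by (auto simp: carrier_FG)
  show ?case
  proof (intro allI impI)
    fix j assume j: "j \<le> length (h1 \<otimes>\<^bsub>FG n\<^esub> h2)"
    show "\<exists>q\<in>set (PLgs gs). rc n ?H (take j (h1 \<otimes>\<^bsub>FG n\<^esub> h2)) = rc n ?H q"
    proof (cases "j \<le> length x")
      case True
      then have "take j (h1 \<otimes>\<^bsub>FG n\<^esub> h2) = take j h1" using xcy by simp
      moreover have "take j h1 = take j x" using True xcy by simp
      moreover have "j \<le> length h1" using True xcy by simp
      ultimately show ?thesis using eng.IH(1) by metis
    next
      case False
      define i where "i = j - length x"
      have ij: "j = length x + i" using False i_def by simp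
      have tk: "take j (h1 \<otimes>\<^bsub>FG n\<^esub> h2) = x @ take i y" using xcy ij by simp
      have t2: "take (length c + i) h2 = winv c @ take i y" using xcy by simp
      have "rd (x @ take i y)" using rd_prefix[of "x @ take i y" "drop i y"] xcy(4) by simp
      then have "x @ take i y = red (h1 @ take (length c + i) h2)"
        using t2 xcy red_cancel_word[of x c "take i y" ] by (simp add: red_rd)
      then have "rc n ?H (x @ take i y) = rc n ?H h1 #>\<^bsub>FG n\<^esub> take (length c + i) h2"
        using FGg.coset_mult_assoc[OF Hc c1 take_carrier[OF c2]] by simp
      also have "rc n ?H h1 = ?H" by (rule FGg.coset_join2[OF c1 sub eng.hyps(1)])
      finally have e: "rc n ?H (x @ take i y) = rc n ?H (take (length c + i) h2)" .
      have "length c + i \<le> length h2" using j xcy ij by simp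
      then show ?thesis using eng.IH(2) e tk by auto
    qed
  qed
qed

lemma cyc_decomp: "rd w \<Longrightarrow> alph n w \<Longrightarrow> \<exists>c v. w = c @ v @ winv c \<and> rd v \<and> (v \<noteq> [] \<longrightarrow> hd v \<noteq> - last v) \<and> (v = [] \<longrightarrow> c = [])"
proof (induction "length w" arbitrary: w rule: less_induct)
  case less
  show ?case
  proof (cases "length w \<le> 1")
    case True
    then consider "w = []" | a where "w = [a]" by (cases w) auto
    then show ?thesis
    proof cases
      case 1 then show ?thesis by (intro exI[of _ "[]"]) simp
    next
      case 2 then have "a \<noteq> 0" using less.prems(2) by (simp add: alph_def)
      then show ?thesis using 2 by (intro exI[of _ "[]"] exI[of _ "[a]"]) simp
    qed
  next
    case False
    obtain a w1 where w1: "w = a # w1" using False by (cases w) auto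
    then have "w1 \<noteq> []" using False by auto
    then obtain w' b where "w1 = w' @ [b]" by (cases w1 rule: rev_cases) auto
    then have w: "w = a # w' @ [b]" using w1 by simp
    show ?thesis
    proof (cases "b = - a")
      case True
      have rw': "rd w'" using less.prems(1) w by (metis rd_prefix rd_tl)
      have aw': "alph n w'" using less.prems(2) w by (simp add: alph_def)
      obtain c v where cv: "w' = c @ v @ winv c" "rd v" "v \<noteq> [] \<longrightarrow> hd v \<noteq> - last v" "v = [] \<longrightarrow> c = []"
        using less.hyps[of w'] rw' aw' w by auto
      have "v \<noteq> []"
      proof
        assume "v = []"
        then have "w = [a, - a]" using cv w True by simp
        then show False using less.prems(1) by simp
      qed
      then show ?thesis using cv w True
        by (intro exI[of _ "a # c"] exI[of _ v]) (simp add: winv_Cons)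
    next
      case False
      then show ?thesis using less.prems w by (intro exI[of _ "[]"] exI[of _ w]) auto
    qed
  qed
qed

abbreviation vp :: "nat \<Rightarrow> int list \<Rightarrow> int list" where
  "vp k v \<equiv> concat (replicate k v)"

lemma vp_hd: "v \<noteq> [] \<Longrightarrow> k \<ge> 1 \<Longrightarrow> hd (vp k v) = hd v"
  by (cases k) auto

lemma vp_last: "v \<noteq> [] \<Longrightarrow> k \<ge> 1 \<Longrightarrow> last (vp k v) = last v"
  by (induction k) (auto simp: last_append)

lemma vp_ne: "v \<noteq> [] \<Longrightarrow> k \<ge> 1 \<Longrightarrow> vp k v \<noteq> []"
  by (cases k) auto

lemma rd_vp: "rd v \<Longrightarrow> v \<noteq> [] \<Longrightarrow> hd v \<noteq> - last v \<Longrightarrow> rd (vp k v)"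
proof (induction k)
  case (Suc k)
  have "vp k v \<noteq> [] \<longrightarrow> hd (vp k v) \<noteq> - last v"
  proof
    assume "vp k v \<noteq> []"
    then have "k \<ge> 1" by (cases k) auto
    then show "hd (vp k v) \<noteq> - last v" using vp_hd[OF Suc.prems(2)] Suc.prems(3) by simp
  qed
  then show ?case using Suc by (simp add: rd_append)
qed simp

lemma vp_add: "vp (i + j) v = vp i v @ vp j v"
  by (simp add: replicate_add)

locale cycw =
  fixes w c v :: "int list"
  assumes w: "w = c @ v @ winv c" and rw: "rd w" and rv: "rd v" and vne: "v \<noteq> []"
    and cyc: "hd v \<noteq> - last v"
begin

lemma rd_c: "rd c" using rw w rd_prefix by blast

lemma rd_Wk: "k \<ge> 1 \<Longrightarrow> rd (c @ vp k v @ winv c)"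
proof -
  assume k: "k \<ge> 1"
  have r1: "rd (v @ winv c)" using rw w by (metis rd_suffix)
  have r2: "rd (c @ v @ winv c)" using rw w by simp
  have "rd (vp k v @ winv c)"
    using r1 rd_vp[OF rv vne cyc, of k] vp_last[OF vne k] vp_ne[OF vne k] by (simp add: rd_append)
  moreover have "c \<noteq> [] \<longrightarrow> hd (vp k v @ winv c) \<noteq> - last c"
    using r2 vp_hd[OF vne k] vp_ne[OF vne k] vne by (simp add: rd_append)
  ultimately show ?thesis using rd_c vp_ne[OF vne k] by (simp add: rd_append)
qed

lemma red_pow: "k \<ge> 1 \<Longrightarrow> red (concat (replicate k w)) = c @ vp k v @ winv c"
proof (induction k rule: dec_induct[where i=1])
  case base
  then show ?case using rw w by (simp add: red_rd)
next
  case (step k)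
  have "red (concat (replicate (Suc k) w)) = red (w @ red (concat (replicate k w)))"
    by (simp add: red_append_right)
  also have "\<dots> = red ((c @ v) @ winv c @ winv (winv c) @ (vp k v @ winv c))" using step w by simp
  also have "\<dots> = red ((c @ v) @ vp k v @ winv c)" by (rule red_cancel_word)
  also have "\<dots> = red (c @ vp (Suc k) v @ winv c)" by simp
  also have "\<dots> = c @ vp (Suc k) v @ winv c" using rd_Wk[of "Suc k"] by (simp add: red_rd)
  finally show ?case .
qed

end

lemma sum_length_PLgs: "length (PLgs gs) = 2 * sum_list (map (\<lambda>g. length g + 1) gs) + 1"
proof -
  have "length (PLgs gs) = 1 + sum_list (map (\<lambda>g. length g + 1) (gs @ map winv gs))"
    by (simp add: PLgs_def length_concat comp_def)
  also have "\<dots> = 1 + 2 * sum_list (map (\<lambda>g. length g + 1) gs)"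
    by (simp add: comp_def)
  finally show ?thesis by simp
qed

lemma length_vp: "length (vp k v) = k * length v"
  by (induction k) auto

lemma bound:
  assumes gs: "set gs \<subseteq> carrier (FG n)" and u: "u \<in> carrier (FG n)" and wc: "w \<in> carrier (FG n)"
    and k: "k \<ge> 1" and mem: "tgt u w k \<in> generate (FG n) (set gs)"
    and minl: "\<forall>k'. 1 \<le> k' \<and> k' < k \<longrightarrow> tgt u w k' \<notin> generate (FG n) (set gs)"
  shows "k \<le> Bm gs u"
proof (rule ccontr)
  assume "\<not> k \<le> Bm gs u"
  then have big: "k > Bm gs u" by simp
  let ?H = "generate (FG n) (set gs)"
  have sub: "subgroup ?H (FG n)" by (rule FGg.generate_is_subgroup[OF gs])
  define S where "S = (\<lambda>q. rc n ?H q) ` set (PLgs gs)"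
  define M where "M = card S"
  have fS: "finite S" by (simp add: S_def)
  have "M \<le> length (PLgs gs)" unfolding M_def S_def
    by (rule le_trans[OF card_image_le[OF finite_set] card_length])
  then have kM: "k \<ge> length u + M + 1" using big sum_length_PLgs[of gs] by (simp add: Bm_def)
  show False
  proof (cases "w = []")
    case True
    then have "tgt u w 1 = tgt u w k" by (simp add: tgt_def)
    moreover have "1 < k" using big by (simp add: Bm_def)
    ultimately show False using minl mem by auto
  next
    case False
    have rw: "rd w" and aw: "alph n w" using wc by (auto simp: carrier_FG)
    obtain c v where cv: "w = c @ v @ winv c" "rd v" "v \<noteq> [] \<longrightarrow> hd v \<noteq> - last v" "v = [] \<longrightarrow> c = []"
      using cyc_decomp[OF rw aw] by blast
    have vne: "v \<noteq> []" using cv False by auto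
    interpret cycw w c v using cv vne rw by unfold_locales auto
    have pw: "w [^]\<^bsub>FG n\<^esub> j = c @ vp j v @ winv c" if "j \<ge> 1" for j
      using pow_FG[OF wc, of j] red_pow[OF that] by simp
        have inS: "rc n ?H (c @ vp j v) \<in> S" if j: "j \<le> M" for j
    proof -
      define Wk where "Wk = c @ vp k v @ winv c"
      have t: "tgt u w k = red (Wk @ winv u)"
        unfolding tgt_def Wk_def using red_pow[OF k] red_append_left[of "concat (replicate k w)" "rev (map uminus u)"]
        by (simp add: winv_def)
      have rwu: "rd (winv u)" using u by (simp add: carrier_FG rd_winv)
      obtain x c0 y where xcy: "Wk = x @ c0" "winv u = winv c0 @ y" "red (Wk @ winv u) = x @ y"
        using cancel_struct[OF rd_Wk[OF k, folded Wk_def] rwu] by blast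
      have "length (winv u) = length (winv c0 @ y)" using xcy(2) by simp
      then have lc0: "length c0 \<le> length u" by simp
      have lWk: "length Wk = 2 * length c + k * length v" by (simp add: Wk_def length_vp)
      have lv: "length v \<ge> 1" using vne by (cases v) auto
      have "(length u + j) * length v \<le> k * length v" using kM j by (intro mult_le_mono1) simp
      then have A: "j * length v + length u * length v \<le> k * length v" by (simp add: algebra_simps)
      have B: "length u \<le> length u * length v" using lv by simp
      have C: "length x + length c0 = 2 * length c + k * length v" using lWk xcy(1) by simp
      have l: "length c + j * length v \<le> length x" using A B C lc0 by linarith
      have jk: "j \<le> k" using j kM by simp
      have Wsplit: "Wk = (c @ vp j v) @ vp (k - j) v @ winv c"
        using vp_add[of j "k - j" v] jk by (simp add: Wk_def)
      have "take (length c + j * length v) (tgt u w k) = take (length c + j * length v) x"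
        using t xcy l by simp
      also have "\<dots> = take (length c + j * length v) Wk" using xcy(1) l by simp
      also have "\<dots> = c @ vp j v" using Wsplit by (simp add: length_vp)
      finally have tk: "take (length c + j * length v) (tgt u w k) = c @ vp j v" .
      have "length c + j * length v \<le> length (tgt u w k)" using t xcy l by simp
      then obtain q where "q \<in> set (PLgs gs)" "rc n ?H (c @ vp j v) = rc n ?H q"
        using prefix_coset[OF gs mem] tk by metis
      then show ?thesis by (auto simp: S_def)
    qed
    define f where "f = (\<lambda>j. rc n ?H (c @ vp j v))"
    have "\<not> inj_on f {0..M}"
    proof
      assume "inj_on f {0..M}"
      then have "card {0..M} \<le> card S" using inS fS by (intro card_inj_on_le) (auto simp: f_def)
      then show False by (simp add: M_def)
    qed
    then obtain i j where ij: "i \<in> {0..M}" "j \<in> {0..M}" "f i = f j" "i \<noteq> j"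
      unfolding inj_on_def by blast
    obtain a b where ab: "a < b" "b \<le> M" "f a = f b"
      using ij by (metis atLeastAtMost_iff linorder_neqE_nat)
    define d where "d = b - a"
    have d1: "d \<ge> 1" and dk: "d < k" using ab kM by (auto simp: d_def)
    have bsplit: "vp b v = vp d v @ vp a v" using vp_add[of d a v] ab by (simp add: d_def)
    have Wb: "c @ vp b v @ winv c \<in> carrier (FG n)" using pw[of b] ab FGg.nat_pow_closed[OF wc, of b] by simp
    have pb: "c @ vp b v \<in> carrier (FG n)" using take_carrier[OF Wb, of "length (c @ vp b v)"] by simp
    have pa: "c @ vp a v \<in> carrier (FG n)"
    proof -
      have "vp b v = vp a v @ vp d v" using vp_add[of a d v] ab by (simp add: d_def)
      then show ?thesis using take_carrier[OF pb, of "length (c @ vp a v)"] by simp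
    qed
    have "c @ vp b v \<in> rc n ?H (c @ vp a v)"
      using ab(3) FGg.rcos_self[OF pb sub] by (simp add: f_def)
    then have "(c @ vp b v) \<otimes>\<^bsub>FG n\<^esub> inv\<^bsub>FG n\<^esub> (c @ vp a v) \<in> ?H"
      by (rule subgroup.rcos_module_imp[OF sub group_FG pa])
    moreover have "(c @ vp b v) \<otimes>\<^bsub>FG n\<^esub> inv\<^bsub>FG n\<^esub> (c @ vp a v) = w [^]\<^bsub>FG n\<^esub> d"
    proof -
      have "(c @ vp b v) \<otimes>\<^bsub>FG n\<^esub> inv\<^bsub>FG n\<^esub> (c @ vp a v) = red ((c @ vp d v) @ vp a v @ winv (vp a v) @ winv c)"
        using pa bsplit by (simp add: inv_FG winv_append)
      also have "\<dots> = red ((c @ vp d v) @ winv c)" using red_cancel_word[of "c @ vp d v" "vp a v" "winv c"] by simp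
      also have "\<dots> = c @ vp d v @ winv c" using rd_Wk[OF d1] by (simp add: red_rd)
      also have "\<dots> = w [^]\<^bsub>FG n\<^esub> d" using pw[OF d1] by simp
      finally show ?thesis .
    qed
    ultimately have wd: "w [^]\<^bsub>FG n\<^esub> d \<in> ?H" by simp
    have wdc: "w [^]\<^bsub>FG n\<^esub> d \<in> carrier (FG n)" and wkdc: "w [^]\<^bsub>FG n\<^esub> (k - d) \<in> carrier (FG n)"
      using FGg.nat_pow_closed[OF wc] by auto
    have iu: "inv\<^bsub>FG n\<^esub> u \<in> carrier (FG n)" using u by simp
    have "tgt u w k = w [^]\<^bsub>FG n\<^esub> d \<otimes>\<^bsub>FG n\<^esub> (w [^]\<^bsub>FG n\<^esub> (k - d) \<otimes>\<^bsub>FG n\<^esub> inv\<^bsub>FG n\<^esub> u)"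
    proof -
      have "w [^]\<^bsub>FG n\<^esub> k = w [^]\<^bsub>FG n\<^esub> d \<otimes>\<^bsub>FG n\<^esub> w [^]\<^bsub>FG n\<^esub> (k - d)"
        using FGg.nat_pow_mult[OF wc, of d "k - d"] dk by simp
      then show ?thesis using tgt_FG[OF u wc, of k] FGg.m_assoc[OF wdc wkdc iu] by simp
    qed
    then have "inv\<^bsub>FG n\<^esub> (w [^]\<^bsub>FG n\<^esub> d) \<otimes>\<^bsub>FG n\<^esub> tgt u w k = tgt u w (k - d)"
      using tgt_FG[OF u wc, of "k - d"] FGg.inv_solve_left[OF _ wdc, of "w [^]\<^bsub>FG n\<^esub> (k - d) \<otimes>\<^bsub>FG n\<^esub> inv\<^bsub>FG n\<^esub> u" "tgt u w k"]
        FGg.m_closed[OF wkdc iu] FGg.m_closed[OF wdc FGg.m_closed[OF wkdc iu]]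
      by (metis FGg.inv_closed FGg.inv_solve_left)
    moreover have "inv\<^bsub>FG n\<^esub> (w [^]\<^bsub>FG n\<^esub> d) \<otimes>\<^bsub>FG n\<^esub> tgt u w k \<in> ?H"
      using wd mem subgroup.m_closed[OF sub subgroup.m_inv_closed[OF sub wd] mem] by simp
    ultimately have "tgt u w (k - d) \<in> ?H" by simp
    moreover have "1 \<le> k - d" "k - d < k" using d1 dk by auto
    ultimately show False using minl by blast
  qed
qed



lemma edec_ecode[simp]: "edec (ecode e) = e"
  by (cases e) (simp add: ecode_def edec_def)

lemma Edec_Ecode[simp]: "Edec (Ecode L) = L"
  by (simp add: Edec_def Ecode_def comp_def)

lemma lnth_list_encode: "i < length xs \<Longrightarrow> lnth (list_encode xs) i = xs ! i"
  by (simp add: lnth_correct)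

context
  fixes n :: nat and gs :: "int list list" and u w :: "int list"
  assumes gs: "set gs \<subseteq> carrier (FG n)" and u: "u \<in> carrier (FG n)" and wc: "w \<in> carrier (FG n)"
begin

abbreviation "HH \<equiv> generate (FG n) (set gs)"

lemma sub: "subgroup HH (FG n)" by (rule FGg.generate_is_subgroup[OF gs])

lemma memk: "w [^]\<^bsub>FG n\<^esub> (k::nat) \<in> HH #>\<^bsub>FG n\<^esub> u \<longleftrightarrow> tgt u w k \<in> HH"
  using subgroup.rcos_module[OF sub group_FG u FGg.nat_pow_closed[OF wc]] tgt_FG[OF u wc] by simp

lemma tgt_carrier: "tgt u w k \<in> carrier (FG n)"
  using tgt_FG[OF u wc] FGg.m_closed[OF FGg.nat_pow_closed[OF wc] FGg.inv_closed[OF u]] by simp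

lemma Ord_char:
  "OrdS (FG n) (HH #>\<^bsub>FG n\<^esub> u) w =
    (if \<exists>k\<ge>1. tgt u w k \<in> HH then (LEAST k. k \<ge> 1 \<and> tgt u w k \<in> HH) else 0)"
  unfolding OrdS_def memk ..

lemma Ord_zero: "(\<forall>k. 1 \<le> k \<and> k \<le> Bm gs u \<longrightarrow> tgt u w k \<notin> HH) \<Longrightarrow> OrdS (FG n) (HH #>\<^bsub>FG n\<^esub> u) w = 0"
proof -
  assume H: "\<forall>k. 1 \<le> k \<and> k \<le> Bm gs u \<longrightarrow> tgt u w k \<notin> HH"
  show ?thesis
  proof (cases "\<exists>k\<ge>1. tgt u w k \<in> HH")
    case True
    define k0 where "k0 = (LEAST k. k \<ge> 1 \<and> tgt u w k \<in> HH)"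
    have k0: "k0 \<ge> 1 \<and> tgt u w k0 \<in> HH" unfolding k0_def using True by (metis (mono_tags, lifting) LeastI)
    have minl: "\<forall>k'. 1 \<le> k' \<and> k' < k0 \<longrightarrow> tgt u w k' \<notin> HH"
      using not_less_Least k0_def by blast
    have "k0 \<le> Bm gs u" using bound[OF gs u wc _ _ minl] k0 by blast
    then show ?thesis using H k0 by blast
  next
    case False
    then show ?thesis unfolding Ord_char by (simp only: if_False)
  qed
qed

lemma Ord_pos: "y \<ge> 1 \<Longrightarrow> tgt u w y \<in> HH \<Longrightarrow> (\<forall>k. 1 \<le> k \<and> k < y \<longrightarrow> tgt u w k \<notin> HH) \<Longrightarrow>
   OrdS (FG n) (HH #>\<^bsub>FG n\<^esub> u) w = y"
proof -
  assume y: "y \<ge> 1" "tgt u w y \<in> HH" "\<forall>k. 1 \<le> k \<and> k < y \<longrightarrow> tgt u w k \<notin> HH"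
  have "(LEAST k. k \<ge> 1 \<and> tgt u w k \<in> HH) = y"
    by (rule Least_equality) (use y not_less in auto)
  then show ?thesis using y by (auto simp: Ord_char)
qed

lemma check_sound: "check_c z (enc_words gs) (enc_word u) (enc_word w) \<Longrightarrow> pfst z = OrdS (FG n) (HH #>\<^bsub>FG n\<^esub> u) w"
proof -
  assume c: "check_c z (enc_words gs) (enc_word u) (enc_word w)"
  show ?thesis
  proof (cases "pfst z = 0")
    case True
    then have "\<forall>k. 1 \<le> k \<and> k \<le> Bm gs u \<longrightarrow> tgt u w k \<notin> HH"
      using c NMm_sound[OF gs] by (simp add: check_c_correct) blast
    then show ?thesis using Ord_zero True by simp
  next
    case False
    then have m: "red (concat (map (gsel gs) (list_decode (lnth (psnd z) 0)))) = tgt u w (pfst z)"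
      and nm: "\<forall>k. 1 \<le> k \<and> k < pfst z \<longrightarrow> NMm gs (Edec (lnth (psnd z) k)) (tgt u w k)"
      using c by (simp_all add: check_c_correct)
    have "tgt u w (pfst z) \<in> HH" using prod_gen[OF gs] m by metis
    moreover have "\<forall>k. 1 \<le> k \<and> k < pfst z \<longrightarrow> tgt u w k \<notin> HH" using nm NMm_sound[OF gs] by blast
    ultimately show ?thesis using Ord_pos[of "pfst z"] False by simp
  qed
qed

definition Lf :: "nat \<Rightarrow> edge list" where
  "Lf k = (SOME L. NMm gs L (tgt u w k))"

lemma Lf: "tgt u w k \<notin> HH \<Longrightarrow> NMm gs (Lf k) (tgt u w k)"
  unfolding Lf_def by (rule someI_ex[OF NMm_complete[OF gs tgt_carrier]])

lemma check_exists: "\<exists>z. check_c z (enc_words gs) (enc_word u) (enc_word w)"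
proof (cases "\<exists>k\<ge>1. tgt u w k \<in> HH")
  case False
  define cs where "cs = map (\<lambda>k. Ecode (Lf k)) [0..<Suc (Bm gs u)]"
  have "check_c (pair 0 (list_encode cs)) (enc_words gs) (enc_word u) (enc_word w)"
    unfolding check_c_correct using False
    by (auto simp: cs_def lnth_list_encode intro!: Lf simp del: upt_Suc)
  then show ?thesis by blast
next
  case True
  define y where "y = (LEAST k. k \<ge> 1 \<and> tgt u w k \<in> HH)"
  have y: "y \<ge> 1 \<and> tgt u w y \<in> HH" unfolding y_def using True by (metis (mono_tags, lifting) LeastI)
  have minl: "\<forall>k'. 1 \<le> k' \<and> k' < y \<longrightarrow> tgt u w k' \<notin> HH"
    using not_less_Least y_def by blast
  obtain es where es: "tgt u w y = red (concat (map (gsel gs) es))" using gen_prod[OF gs] y by blast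
  define cs where "cs = map (\<lambda>k. if k = 0 then list_encode es else Ecode (Lf k)) [0..<y]"
  have "check_c (pair y (list_encode cs)) (enc_words gs) (enc_word u) (enc_word w)"
    unfolding check_c_correct using y minl es
    by (auto simp: cs_def lnth_list_encode intro!: Lf)
  then show ?thesis by blast
qed

end

lemma main1: "\<exists>r. \<forall>gs u w.
            set gs \<subseteq> carrier (free_group n) \<longrightarrow> u \<in> carrier (free_group n) \<longrightarrow>
            w \<in> carrier (free_group n) \<longrightarrow>
            eval r [enc_words gs, enc_word u, enc_word w]
              (OrdS (free_group n) (generate (free_group n) (set gs) #>\<^bsub>free_group n\<^esub> u) w)"
proof -
  define p where "p = (\<lambda>ys::nat list. if check_c (ys!0) (ys!1) (ys!2) (ys!3) then 0 else (1::nat))"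
  have cp: "cpt (Suc 3) p" unfolding p_def using compP_check
    by (intro comp_if comp_const) simp_all
  obtain r0 where r0: "\<forall>xs. length xs = 3 \<and> (\<exists>z. p (z # xs) = 0) \<longrightarrow> eval r0 xs (LEAST z. p (z # xs) = 0)"
    using eval_Mu_least[OF cp] by blast
  have "cpt 1 (\<lambda>ys. pfst (ys!0))" by (intro comp_pfst comp_proj) simp
  then obtain rf where rf: "\<forall>ys. length ys = 1 \<longrightarrow> eval rf ys (pfst (ys!0))" unfolding cpt_def by blast
  show ?thesis
  proof (intro exI[of _ "Comp rf [r0]"] allI impI)
    fix gs u w assume gs: "set gs \<subseteq> carrier (FG n)" and u: "u \<in> carrier (FG n)" and wc: "w \<in> carrier (FG n)"
    let ?xs = "[enc_words gs, enc_word u, enc_word w]"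
    have ex: "\<exists>z. p (z # ?xs) = 0" using check_exists[OF gs u wc] by (simp add: p_def)
    let ?z = "LEAST z. p (z # ?xs) = 0"
    have "p (?z # ?xs) = 0" using ex by (rule LeastI_ex)
    then have ch: "check_c ?z (enc_words gs) (enc_word u) (enc_word w)" by (simp add: p_def split: if_splits)
    have e0: "eval r0 ?xs ?z" using r0 ex by simp
    have "eval (Comp rf [r0]) ?xs (pfst ?z)"
      by (rule eval_Comp[of _ _ "[?z]"]) (use e0 rf[rule_format, of "[?z]"] in auto)
    then show "eval (Comp rf [r0]) ?xs (OrdS (free_group n) (generate (free_group n) (set gs) #>\<^bsub>free_group n\<^esub> u) w)"
      using check_sound[OF gs u wc ch] by simp
  qed
qed

theorem theorem6p30:
  fixes n :: nat
  shows "(\<exists>r. \<forall>gs u w.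
            set gs \<subseteq> carrier (free_group n) \<longrightarrow> u \<in> carrier (free_group n) \<longrightarrow>
            w \<in> carrier (free_group n) \<longrightarrow>
            eval r [enc_words gs, enc_word u, enc_word w]
              (OrdS (free_group n) (generate (free_group n) (set gs) #>\<^bsub>free_group n\<^esub> u) w))
       \<and> (\<exists>r. \<forall>gs w.
            set gs \<subseteq> carrier (free_group n) \<longrightarrow> w \<in> carrier (free_group n) \<longrightarrow>
            eval r [enc_words gs, enc_word w]
              (OrdS (free_group n) (generate (free_group n) (set gs)) w))
       \<and> (\<exists>r. \<forall>gs w.
            set gs \<subseteq> carrier (free_group n) \<longrightarrow> w \<in> carrier (free_group n) \<longrightarrow>
            eval r [enc_words gs, enc_word w]
              (if OrdS (free_group n) (generate (free_group n) (set gs)) w \<noteq> 0 then 1 else 0))"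
proof -
  obtain r1 where r1: "\<forall>gs u w.
            set gs \<subseteq> carrier (free_group n) \<longrightarrow> u \<in> carrier (free_group n) \<longrightarrow>
            w \<in> carrier (free_group n) \<longrightarrow>
            eval r1 [enc_words gs, enc_word u, enc_word w]
              (OrdS (free_group n) (generate (free_group n) (set gs) #>\<^bsub>free_group n\<^esub> u) w)"
    using main1 by blast
  have r2: "eval (Comp r1 [Proj 0, Zero, Proj 1]) [enc_words gs, enc_word w]
              (OrdS (free_group n) (generate (free_group n) (set gs)) w)"
    if gs: "set gs \<subseteq> carrier (free_group n)" and wc: "w \<in> carrier (free_group n)" for gs w
  proof -
    have e: "[] \<in> carrier (FG n)" using FGg.one_closed by simp
    have Hc: "generate (FG n) (set gs) \<subseteq> carrier (FG n)"
      using subgroup.subset[OF FGg.generate_is_subgroup[OF gs]] .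
    have "generate (FG n) (set gs) #>\<^bsub>FG n\<^esub> [] = generate (FG n) (set gs)"
      using FGg.coset_mult_one[OF Hc] by simp
    then have "eval r1 [enc_words gs, 0, enc_word w] (OrdS (free_group n) (generate (free_group n) (set gs)) w)"
      using r1[rule_format, OF gs e wc] by simp
    moreover have "eval (Proj 0) [enc_words gs, enc_word w] (enc_words gs)"
      using eval_Proj[of 0 "[enc_words gs, enc_word w]"] by simp
    moreover have "eval (Proj 1) [enc_words gs, enc_word w] (enc_word w)"
      using eval_Proj[of 1 "[enc_words gs, enc_word w]"] by simp
    ultimately show ?thesis
      by (intro eval_Comp[of _ _ "[enc_words gs, 0, enc_word w]"]) (auto intro: eval_Zero)
  qed
  have "cpt 1 (\<lambda>ys. if ys!0 \<noteq> 0 then 1 else 0)" by (intro comp_if compP_not compP_eq comp_proj comp_const) simp_all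
  then obtain rs where rs: "\<forall>ys. length ys = 1 \<longrightarrow> eval rs ys (if ys!0 \<noteq> 0 then 1 else 0)" unfolding cpt_def by blast
  have r3: "eval (Comp rs [Comp r1 [Proj 0, Zero, Proj 1]]) [enc_words gs, enc_word w]
              (if OrdS (free_group n) (generate (free_group n) (set gs)) w \<noteq> 0 then 1 else 0)"
    if gs: "set gs \<subseteq> carrier (free_group n)" and wc: "w \<in> carrier (free_group n)" for gs w
    by (rule eval_Comp[of _ _ "[OrdS (free_group n) (generate (free_group n) (set gs)) w]"])
       (use r2[OF gs wc] rs[rule_format, of "[OrdS (free_group n) (generate (free_group n) (set gs)) w]"] in auto)
  show ?thesis using r1 r2 r3 by blast
qed


end
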